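(* Under Assumptions A1–A3 (see context), with $\tilde\theta_k=\theta-\theta_k$ and $\tilde{\bar\theta}_k=\theta-\bar\theta_k$, $$|\psi_k-\beta_k\phi_k^{\mathrm T}\tilde\theta_k|=O\big(|\phi_k^{\mathrm T}\tilde{\bar\theta}_k|\big)\quad\text{a.s.},$$ i.e. there is an a.s. finite random constant $K$, independent of $k$, with $|\psi_k-\beta_k\phi_k^{\mathrm T}\tilde\theta_k|\le K|\phi_k^{\mathrm T}\tilde{\bar\theta}_k|$ for all $k$, where $$\psi_k=\mathbb E_k\{\operatorname{sgn}[y_{k+1}-S_k(\phi_k^{\mathrm T}\theta_k)]\}+F_{k+1}(u_k-\phi_k^{\mathrm T}\theta_k)\mathrm I_{[S_k(\phi_k^{\mathrm T}\theta_k)=U_k]}-[1-F_{k+1}(l_k-\phi_k^{\mathrm T}\theta_k)]\mathrm I_{[S_k(\phi_k^{\mathrm T}\theta_k)=L_k]}.$$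
   Context: Setting. Let $\{\mathcal F_k\}_{k\ge0}$ be a nondecreasing sequence of $\sigma$-algebras and write $\mathbb E_k[\cdot]=\mathbb E[\cdot\mid\mathcal F_k]$. Observations follow the saturated model $y_{k+1}=S_k(\phi_k^{\mathrm T}\theta+\varepsilon_{k+1})$, $k=0,1,2,\dots$, where $\phi_k\in\mathbb R^d$ is $\mathcal F_k$-measurable, $\theta\in\mathbb R^d$ is unknown, $\varepsilon_{k+1}\in\mathbb R$ is noise ($\mathcal F_{k+1}$-measurable), and $S_k(x)=L_k$ if $x<l_k$, $S_k(x)=x$ if $l_k\le x\le u_k$, $S_k(x)=U_k$ if $x>u_k$. Assumption A1: $\{\phi_k\}$ is bounded in $k$, and $\theta$ is an interior point of a known convex compact set $D\subseteq\mathbb R^d$. Let $\{C_k\}$ be a bounded $\mathcal F_k$-adapted sequence with $\sup_{x\in D}|\phi_k^{\mathrm T}x|\le C_k$. Assumption A2: $l_k,u_k,L_k,U_k$ are known $\mathcal F_k$-measurable random variables with $L_k\le l_k\le u_k\le U_k$ a.s.; there is a constant $M$ with $\sup_{k\ge0}\max\{l_k,-u_k\}\le M<\infty$ a.s.; and $L_k=l_k=u_k=U_k$ does not hold a.s. The weights $b_k$ are known, $\mathcal F_k$-measurable, with $0<\inf_k b_k\le\sup_k b_k\le 1$. Assumption A3: the conditional distribution function $F_{k+1}$ of $\varepsilon_{k+1}$ given $\mathcal F_k$ satisfies $F_{k+1}(0)=1/2$; its conditional density $f_{k+1}$ is continuous and known; and there is a constant $C\ge\sup_k C_k$ with $0<\inf_{|x|\le\max\{2C,C+M\},k\ge0}f_{k+1}(x)\le\sup_{|x|\le\max\{2C,C+M\},k\ge0}f_{k+1}(x)<\infty$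 a.s. Projection: for positive definite $Q$, $\|x\|_Q^2=x^{\mathrm T}Qx$ and $\Pi_Q(x)=\arg\min_{y\in D}\|x-y\|_Q$. TSWLAD algorithm. Step 1: with $\bar\theta_0\in D$, $\bar P_0>0$, and an $\mathcal F_k$-adapted sequence $\bar\mu_k$ with $0<\inf\bar\mu_k\le\sup\bar\mu_k<\infty$, for $k\ge0$: $\bar\theta_{k+1}=\Pi_{\bar P_{k+1}^{-1}}\{\bar\theta_k+\bar a_k b_k\bar P_k\phi_k\bar v_{k+1}\}$, $\bar v_{k+1}=\operatorname{sgn}[y_{k+1}-S_k(\phi_k^{\mathrm T}\bar\theta_k)]+F_{k+1}(u_k-\phi_k^{\mathrm T}\bar\theta_k)\mathrm I_{[S_k(\phi_k^{\mathrm T}\bar\theta_k)=U_k]}-[1-F_{k+1}(l_k-\phi_k^{\mathrm T}\bar\theta_k)]\mathrm I_{[S_k(\phi_k^{\mathrm T}\bar\theta_k)=L_k]}$, $\bar P_{k+1}=\bar P_k-\bar a_k\bar\beta_k b_k^2\bar P_k\phi_k\phi_k^{\mathrm T}\bar P_k$, $\bar a_k=1/(\bar\mu_k+\bar\beta_k b_k^2\phi_k^{\mathrm T}\bar P_k\phi_k)$, $\bar\beta_k=\inf_{|x|\le\max\{2C_k,C_k+l_k,C_k-u_k\}}f_{k+1}(x)$. Step 2: with $\theta_0\in D$, $P_0>0$, and $\mu_k$ with $0<\inf\mu_k\le\sup\mu_k<\infty$, for $k\ge0$, letting $d_k=\phi_k^{\mathrm T}(\bar\theta_k-\theta_k)$: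 $\theta_{k+1}=\Pi_{P_{k+1}^{-1}}\{\theta_k+a_kb_kP_k\phi_kv_{k+1}\}$, $v_{k+1}=\operatorname{sgn}[y_{k+1}-S_k(\phi_k^{\mathrm T}\theta_k)]+F_{k+1}(u_k-\phi_k^{\mathrm T}\theta_k)\mathrm I_{[S_k(\phi_k^{\mathrm T}\theta_k)=U_k]}-[1-F_{k+1}(l_k-\phi_k^{\mathrm T}\theta_k)]\mathrm I_{[S_k(\phi_k^{\mathrm T}\theta_k)=L_k]}$, $P_{k+1}=P_k-a_k\beta_kb_k^2P_k\phi_k\phi_k^{\mathrm T}P_k$, $a_k=1/(\mu_k+\beta_kb_k^2\phi_k^{\mathrm T}P_k\phi_k)$, and $\beta_k=\frac{F_{k+1}(l_k-\phi_k^{\mathrm T}\theta_k)-F_{k+1}(l_k-\phi_k^{\mathrm T}\bar\theta_k)}{d_k}\mathrm I_{[d_k\ne0]}+f_{k+1}(l_k-\phi_k^{\mathrm T}\theta_k)\mathrm I_{[d_k=0]}$ if $S_k(\phi_k^{\mathrm T}\theta_k)=L_k$; $\beta_k=\frac{1-2F_{k+1}(\phi_k^{\mathrm T}\theta_k-\phi_k^{\mathrm T}\bar\theta_k)}{d_k}\mathrm I_{[d_k\ne0]}+2f_{k+1}(0)\mathrm I_{[d_k=0]}$ if $L_k<S_k(\phi_k^{\mathrm T}\theta_k)<U_k$; $\beta_k=\frac{F_{k+1}(u_k-\phi_k^{\mathrm T}\theta_k)-F_{k+1}(u_k-\phi_k^{\mathrm T}\bar\theta_k)}{d_k}\mathrm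 I_{[d_k\ne0]}+f_{k+1}(u_k-\phi_k^{\mathrm T}\theta_k)\mathrm I_{[d_k=0]}$ if $S_k(\phi_k^{\mathrm T}\theta_k)=U_k$. Here $\operatorname{sgn}$ is the sign function and $\mathrm I_{[\cdot]}$ the indicator. *)

theory Defs
  imports "HOL-Probability.Probability"
begin

definition Sat :: "real \<Rightarrow> real \<Rightarrow> real \<Rightarrow> real \<Rightarrow> real \<Rightarrow> real" where
  "Sat L l u U x = (if x < l then L else if x > u then U else x)"

definition ind :: "bool \<Rightarrow> real" where
  "ind b = (if b then 1 else 0)"

definition corr :: "(real \<Rightarrow> real) \<Rightarrow> real \<Rightarrow> real \<Rightarrow> real \<Rightarrow> real \<Rightarrow> real \<Rightarrow> real" where
  "corr F L l u U x =
     F (u - x) * ind (Sat L l u U x = U) - (1 - F (l - x)) * ind (Sat L l u U x = L)"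

definition qnorm :: "real^'n^'n \<Rightarrow> real^'n \<Rightarrow> real" where
  "qnorm Q x = sqrt (x \<bullet> (Q *v x))"

definition proj :: "real^'n^'n \<Rightarrow> (real^'n) set \<Rightarrow> real^'n \<Rightarrow> real^'n" where
  "proj Q D x = (SOME y. y \<in> D \<and> (\<forall>z\<in>D. qnorm Q (x - y) \<le> qnorm Q (x - z)))"

definition posdef :: "real^'n^'n \<Rightarrow> bool" where
  "posdef Q \<longleftrightarrow> transpose Q = Q \<and> (\<forall>x. x \<noteq> 0 \<longrightarrow> x \<bullet> (Q *v x) > 0)"

definition outer :: "real^'n \<Rightarrow> real^'n \<Rightarrow> real^'n^'n" where
  "outer x y = (\<chi> i j. x $ i * y $ j)"

text \<open>F is (a regular version of) the conditional distribution function of X given G,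
  with (conditional) density f.\<close>
definition cond_cdf_density ::
  "'a measure \<Rightarrow> 'a measure \<Rightarrow> ('a \<Rightarrow> real) \<Rightarrow> ('a \<Rightarrow> real \<Rightarrow> real) \<Rightarrow> ('a \<Rightarrow> real \<Rightarrow> real) \<Rightarrow> bool"
where
  "cond_cdf_density M G X F f \<longleftrightarrow>
     (\<forall>x. (\<lambda>\<omega>. F \<omega> x) \<in> borel_measurable G \<and>
          (AE \<omega> in M. F \<omega> x =
             real_cond_exp M G (indicator {\<omega>\<in>space M. X \<omega> \<le> x} :: 'a \<Rightarrow> real) \<omega>)) \<and>
     (\<forall>\<omega>\<in>space M. mono (F \<omega>) \<and> (F \<omega> \<longlongrightarrow> 0) at_bot \<and> (F \<omega> \<longlongrightarrow> 1) at_top \<and>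
        continuous_on UNIV (f \<omega>) \<and> (\<forall>x. f \<omega> x \<ge> 0) \<and>
        (\<forall>x. (f \<omega> has_integral F \<omega> x) {..x}))"

text \<open>beta_k of Step 2 (case analysis on S_k(phi_k^T theta_k)); xk = phi_k^T theta_k,
  xbk = phi_k^T thetabar_k, d_k = xbk - xk.\<close>
definition beta2 :: "(real \<Rightarrow> real) \<Rightarrow> (real \<Rightarrow> real) \<Rightarrow> real \<Rightarrow> real \<Rightarrow> real \<Rightarrow> real \<Rightarrow> real \<Rightarrow> real \<Rightarrow> real"
where
  "beta2 F f L l u U xk xbk =
    (let d = xbk - xk; s = Sat L l u U xk in
     if s = L then
       (if d \<noteq> 0 then (F (l - xk) - F (l - xbk)) / d else f (l - xk))
     else if L < s \<and> s < U then
       (if d \<noteq> 0 then (1 - 2 * F (xk - xbk)) / d else 2 * f 0)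
     else
       (if d \<noteq> 0 then (F (u - xk) - F (u - xbk)) / d else f (u - xk)))"

end

theory Submission
  imports Defs
begin


lemma lim_int_eq:
  fixes f g :: "nat \<Rightarrow> 'a \<Rightarrow> real"
  assumes M: "prob_space M"
    and fm: "\<And>n. f n \<in> borel_measurable M" "f' \<in> borel_measurable M"
    and gm: "\<And>n. g n \<in> borel_measurable M" "g' \<in> borel_measurable M"
    and fl: "\<And>\<omega>. \<omega> \<in> space M \<Longrightarrow> (\<lambda>n. f n \<omega>) \<longlonglongrightarrow> f' \<omega>"
    and gl: "\<And>\<omega>. \<omega> \<in> space M \<Longrightarrow> (\<lambda>n. g n \<omega>) \<longlonglongrightarrow> g' \<omega>"
    and fb: "\<And>n \<omega>. \<omega> \<in> space M \<Longrightarrow> \<bar>f n \<omega>\<bar> \<le> 1"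
    and gb: "\<And>n \<omega>. \<omega> \<in> space M \<Longrightarrow> \<bar>g n \<omega>\<bar> \<le> 1"
    and eq: "\<And>n. integral\<^sup>L M (f n) = integral\<^sup>L M (g n)"
  shows "integral\<^sup>L M f' = integral\<^sup>L M g'"
proof -
  interpret prob_space M by fact
  have 1: "(\<lambda>n. integral\<^sup>L M (f n)) \<longlonglongrightarrow> integral\<^sup>L M f'"
    by (rule integral_dominated_convergence[where w="\<lambda>_. 1"]) (use fm fl fb in auto)
  have 2: "(\<lambda>n. integral\<^sup>L M (g n)) \<longlonglongrightarrow> integral\<^sup>L M g'"
    by (rule integral_dominated_convergence[where w="\<lambda>_. 1"]) (use gm gl gb in auto)
  show ?thesis using 1 2 eq LIMSEQ_unique by (metis (no_types, lifting) ext)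
qed

lemma set_le_meas:
  fixes f g :: "'a \<Rightarrow> real"
  assumes "f \<in> borel_measurable M" "g \<in> borel_measurable M"
  shows "{\<omega>\<in>space M. f \<omega> \<le> g \<omega>} \<in> sets M" "{\<omega>\<in>space M. f \<omega> < g \<omega>} \<in> sets M"
  using assms by (simp_all add: borel_measurable_le borel_measurable_less)

lemma ind_meas:
  "A \<in> sets M \<Longrightarrow> B \<in> sets M \<Longrightarrow> (\<lambda>\<omega>. indicator A \<omega> * indicator B \<omega> :: real) \<in> borel_measurable M"
  by (rule borel_measurable_times) (rule borel_measurable_indicator, assumption)+

lemma sum_delta_ind:
  assumes "finite V" "w \<in> V"
  shows "(\<Sum>v\<in>V. (if w = v then 1 else 0) * g v) = (g w :: real)"
proof -
  have "(\<Sum>v\<in>V. (if w = v then 1 else 0) * g v) = (\<Sum>v\<in>V. if w = v then g v else 0)"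
    by (intro sum.cong) auto
  then show ?thesis using assms by simp
qed

lemma cdf_const:
  fixes e :: "'a \<Rightarrow> real" and Fc :: "'a \<Rightarrow> real \<Rightarrow> real"
  assumes M: "prob_space M" and sub: "subalgebra M G"
    and e: "e \<in> borel_measurable M"
    and hce: "AE \<omega> in M. Fc \<omega> c = real_cond_exp M G (indicator {\<omega>\<in>space M. e \<omega> \<le> c}) \<omega>"
    and hm: "(\<lambda>\<omega>. Fc \<omega> c) \<in> borel_measurable G"
    and A: "A \<in> sets G"
  shows "(\<integral>\<omega>. indicator A \<omega> * indicator {\<omega>\<in>space M. e \<omega> \<le> c} \<omega> \<partial>M) = (\<integral>\<omega>. indicator A \<omega> * Fc \<omega> c \<partial>M)"
proof -
  interpret prob_space M by fact
  interpret finite_measure_subalgebra M G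
    by (simp add: finite_measure_subalgebra_def finite_measure_subalgebra_axioms_def sub finite_measure_axioms)
  have AM: "A \<in> sets M" using A sub by (meson subalgebra_def subsetD)
  have sm: "{\<omega>\<in>space M. e \<omega> \<le> c} \<in> sets M"
    using measurable_sets[OF e atMost_borel] by (simp add: vimage_def Int_def conj_commute)
  have int: "integrable M (indicator {\<omega>\<in>space M. e \<omega> \<le> c} :: _ \<Rightarrow> real)"
    using sm by (intro integrable_const_bound[where B=1]) auto
  have "(\<integral>\<omega>. (indicator A \<omega>::real) * indicator {\<omega>\<in>space M. e \<omega> \<le> c} \<omega> \<partial>M)
      = (\<integral>\<omega>\<in>A. indicator {\<omega>\<in>space M. e \<omega> \<le> c} \<omega> \<partial>M)"
    by (simp add: set_lebesgue_integral_def)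
  also have "\<dots> = (\<integral>\<omega>\<in>A. real_cond_exp M G (indicator {\<omega>\<in>space M. e \<omega> \<le> c}) \<omega> \<partial>M)"
    by (rule real_cond_exp_intA[OF int A])
  also have "\<dots> = (\<integral>\<omega>. indicator A \<omega> * real_cond_exp M G (indicator {\<omega>\<in>space M. e \<omega> \<le> c}) \<omega> \<partial>M)"
    by (simp add: set_lebesgue_integral_def)
  also have "\<dots> = (\<integral>\<omega>. indicator A \<omega> * Fc \<omega> c \<partial>M)"
  proof (rule integral_cong_AE)
    show "(\<lambda>\<omega>. indicator A \<omega> * real_cond_exp M G (indicator {\<omega>\<in>space M. e \<omega> \<le> c}) \<omega>) \<in> borel_measurable M"
      using AM borel_measurable_cond_exp2 by measurable
    show "(\<lambda>\<omega>. (indicator A \<omega>::real) * Fc \<omega> c) \<in> borel_measurable M"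
      using AM measurable_from_subalg[OF sub hm] by measurable
    show "AE \<omega> in M. indicator A \<omega> * real_cond_exp M G (indicator {\<omega>\<in>space M. e \<omega> \<le> c}) \<omega> = indicator A \<omega> * Fc \<omega> c"
      using hce by eventually_elim simp
  qed
  finally show ?thesis .
qed

lemma cdf_finite:
  fixes e W :: "'a \<Rightarrow> real" and Fc :: "'a \<Rightarrow> real \<Rightarrow> real"
  assumes M: "prob_space M" and sub: "subalgebra M G"
    and e: "e \<in> borel_measurable M"
    and hce: "\<And>c. AE \<omega> in M. Fc \<omega> c = real_cond_exp M G (indicator {\<omega>\<in>space M. e \<omega> \<le> c}) \<omega>"
    and hm: "\<And>c. (\<lambda>\<omega>. Fc \<omega> c) \<in> borel_measurable G"
    and hb: "\<And>\<omega> x. \<omega> \<in> space M \<Longrightarrow> 0 \<le> Fc \<omega> x \<and> Fc \<omega> x \<le> 1"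
    and W: "W \<in> borel_measurable G" and V: "finite V" "\<And>\<omega>. \<omega> \<in> space M \<Longrightarrow> W \<omega> \<in> V"
    and A: "A \<in> sets G"
  shows "(\<integral>\<omega>. indicator A \<omega> * indicator {\<omega>\<in>space M. e \<omega> \<le> W \<omega>} \<omega> \<partial>M) = (\<integral>\<omega>. indicator A \<omega> * Fc \<omega> (W \<omega>) \<partial>M)"
    and "(\<lambda>\<omega>. Fc \<omega> (W \<omega>)) \<in> borel_measurable G"
proof -
  interpret prob_space M by fact
  have sp: "space G = space M" using sub by (simp add: subalgebra_def)
  define B where "B v = {\<omega>\<in>space M. W \<omega> = v}" for v
  have BG: "B v \<in> sets G" for v
    unfolding B_def using measurable_sets[OF W, of "{v}"] sp by (simp add: vimage_def Int_def conj_commute)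
  have BM: "B v \<in> sets M" for v using BG sub by (meson subalgebra_def subsetD)
  have AM: "A \<in> sets M" using A sub by (meson subalgebra_def subsetD)
  have sm: "{\<omega>\<in>space M. e \<omega> \<le> c} \<in> sets M" for c
    using measurable_sets[OF e atMost_borel] by (simp add: vimage_def Int_def conj_commute)
  have Fm: "(\<lambda>\<omega>. Fc \<omega> c) \<in> borel_measurable M" for c using measurable_from_subalg[OF sub hm] .
  have r1: "(indicator A \<omega>::real) * indicator {\<omega>\<in>space M. e \<omega> \<le> W \<omega>} \<omega>
      = (\<Sum>v\<in>V. (indicator (A \<inter> B v) \<omega>::real) * indicator {\<omega>\<in>space M. e \<omega> \<le> v} \<omega>)" if "\<omega> \<in> space M" for \<omega>
  proof -
    have "(\<Sum>v\<in>V. (indicator (A \<inter> B v) \<omega>::real) * indicator {\<omega>\<in>space M. e \<omega> \<le> v} \<omega>)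
       = (\<Sum>v\<in>V. (if W \<omega> = v then 1 else 0) * (indicator A \<omega> * indicator {\<omega>\<in>space M. e \<omega> \<le> v} \<omega>))"
      using that by (intro sum.cong) (auto simp: B_def indicator_def)
    also have "\<dots> = indicator A \<omega> * indicator {\<omega>\<in>space M. e \<omega> \<le> W \<omega>} \<omega>"
      by (subst sum_delta_ind[OF V(1) V(2)[OF that]]) (use that in \<open>simp add: indicator_def\<close>)
    finally show ?thesis by simp
  qed
  have r2: "(indicator A \<omega>::real) * Fc \<omega> (W \<omega>) = (\<Sum>v\<in>V. (indicator (A \<inter> B v) \<omega>::real) * Fc \<omega> v)" if "\<omega> \<in> space M" for \<omega>
  proof -
    have "(\<Sum>v\<in>V. (indicator (A \<inter> B v) \<omega>::real) * Fc \<omega> v)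
       = (\<Sum>v\<in>V. (if W \<omega> = v then 1 else 0) * (indicator A \<omega> * Fc \<omega> v))"
      using that by (intro sum.cong) (auto simp: B_def indicator_def)
    also have "\<dots> = indicator A \<omega> * Fc \<omega> (W \<omega>)"
      by (rule sum_delta_ind[OF V(1) V(2)[OF that]])
    finally show ?thesis by simp
  qed
  have r3: "Fc \<omega> (W \<omega>) = (\<Sum>v\<in>V. (indicator (B v) \<omega>::real) * Fc \<omega> v)" if "\<omega> \<in> space M" for \<omega>
  proof -
    have "(\<Sum>v\<in>V. (indicator (B v) \<omega>::real) * Fc \<omega> v) = (\<Sum>v\<in>V. (if W \<omega> = v then 1 else 0) * Fc \<omega> v)"
      using that by (intro sum.cong) (auto simp: B_def indicator_def)
    then show ?thesis using sum_delta_ind[OF V(1) V(2)[OF that]] by simp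
  qed
  show "(\<lambda>\<omega>. Fc \<omega> (W \<omega>)) \<in> borel_measurable G"
    apply (subst measurable_cong[where g="\<lambda>\<omega>. (\<Sum>v\<in>V. indicator (B v) \<omega> * Fc \<omega> v)"])
    using r3 sp apply simp
    using BG hm by measurable
  have "(\<integral>\<omega>. (indicator A \<omega>::real) * indicator {\<omega>\<in>space M. e \<omega> \<le> W \<omega>} \<omega> \<partial>M)
       = (\<integral>\<omega>. (\<Sum>v\<in>V. (indicator (A \<inter> B v) \<omega>::real) * indicator {\<omega>\<in>space M. e \<omega> \<le> v} \<omega>) \<partial>M)"
    by (rule Bochner_Integration.integral_cong) (simp_all add: r1)
  also have "\<dots> = (\<Sum>v\<in>V. (\<integral>\<omega>. indicator (A \<inter> B v) \<omega> * indicator {\<omega>\<in>space M. e \<omega> \<le> v} \<omega> \<partial>M))"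
    by (rule Bochner_Integration.integral_sum) (use AM BM sm in \<open>auto intro!: integrable_const_bound[where B=1] simp: indicator_def\<close>)
  also have "\<dots> = (\<Sum>v\<in>V. (\<integral>\<omega>. indicator (A \<inter> B v) \<omega> * Fc \<omega> v \<partial>M))"
    by (intro sum.cong refl cdf_const[OF M sub e hce hm]) (use A BG in auto)
  also have "\<dots> = (\<integral>\<omega>. (\<Sum>v\<in>V. (indicator (A \<inter> B v) \<omega>::real) * Fc \<omega> v) \<partial>M)"
    by (rule Bochner_Integration.integral_sum[symmetric]) (use AM BM Fm hb in \<open>auto intro!: integrable_const_bound[where B=1] simp: indicator_def\<close>)
  also have "\<dots> = (\<integral>\<omega>. indicator A \<omega> * Fc \<omega> (W \<omega>) \<partial>M)"
    by (rule Bochner_Integration.integral_cong) (simp_all add: r2)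
  finally show "(\<integral>\<omega>. indicator A \<omega> * indicator {\<omega>\<in>space M. e \<omega> \<le> W \<omega>} \<omega> \<partial>M) = (\<integral>\<omega>. indicator A \<omega> * Fc \<omega> (W \<omega>) \<partial>M)" .
qed
lemma dyadic_approx:
  fixes z :: real
  defines "zn \<equiv> \<lambda>n::nat. real_of_int \<lceil>max (-real n) (min (real n) z) * 2^n\<rceil> / 2^n"
  shows "eventually (\<lambda>n. z \<le> zn n) sequentially" "zn \<longlonglongrightarrow> z"
    and "\<And>n. zn n \<in> (\<lambda>j. real_of_int j / 2^n) ` {-(int n * 2^n) .. int n * 2^n}"
proof -
  have ev: "eventually (\<lambda>n. z \<le> zn n \<and> zn n \<le> z + (1/2)^n) sequentially"
  proof (rule eventually_sequentiallyI[of "nat \<lceil>\<bar>z\<bar>\<rceil>"])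
    fix n assume "nat \<lceil>\<bar>z\<bar>\<rceil> \<le> n"
    then have "\<bar>z\<bar> \<le> real n" by linarith
    then have mm: "max (-real n) (min (real n) z) = z" by auto
    have p: "(0::real) < 2^n" by simp
    have c1: "z * 2^n \<le> real_of_int \<lceil>z * 2^n\<rceil>" by (rule le_of_int_ceiling)
    have c2: "real_of_int \<lceil>z * 2^n\<rceil> < z * 2^n + 1" using ceiling_correct[of "z * 2^n"] by linarith
    show "z \<le> zn n \<and> zn n \<le> z + (1/2)^n"
      unfolding zn_def mm using c1 c2 p by (auto simp: field_simps power_one_over)
  qed
  show "eventually (\<lambda>n. z \<le> zn n) sequentially" using ev by (rule eventually_mono) auto
  show "zn \<longlonglongrightarrow> z"
  proof (rule tendsto_sandwich[of "\<lambda>n. z" _ _ "\<lambda>n. z + (1/2)^n"])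
    show "eventually (\<lambda>n. z \<le> zn n) sequentially" "eventually (\<lambda>n. zn n \<le> z + (1/2)^n) sequentially"
      using ev by (auto elim: eventually_mono)
    show "(\<lambda>n. z) \<longlonglongrightarrow> z" by simp
    show "(\<lambda>n. z + (1/2)^n) \<longlonglongrightarrow> z"
      using tendsto_add[OF tendsto_const[of z] LIMSEQ_power_zero[of "1/2::real"]] by simp
  qed
  fix n :: nat
  let ?t = "max (-real n) (min (real n) z)"
  have p: "(0::real) < 2^n" by simp
  have t0: "-real n \<le> ?t" "?t \<le> real n" by auto
  have t1: "- (real n * 2^n) \<le> ?t * 2^n" "?t * 2^n \<le> real n * 2^n"
    using mult_right_mono[OF t0(1), of "2^n"] mult_right_mono[OF t0(2), of "2^n"] p by auto
  have "-(int n * 2^n) \<le> \<lceil>?t * 2^n\<rceil>"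
    using t1(1) le_of_int_ceiling[of "?t * 2^n"] by (simp add: ceiling_le_iff le_ceiling_iff)
  moreover have "\<lceil>?t * 2^n\<rceil> \<le> int n * 2^n"
    using t1(2) by (simp add: ceiling_le_iff)
  ultimately show "zn n \<in> (\<lambda>j. real_of_int j / 2^n) ` {-(int n * 2^n) .. int n * 2^n}"
    unfolding zn_def by auto
qed

lemma cdf_gen:
  fixes e Z :: "'a \<Rightarrow> real" and Fc :: "'a \<Rightarrow> real \<Rightarrow> real"
  assumes M: "prob_space M" and sub: "subalgebra M G"
    and e: "e \<in> borel_measurable M"
    and hce: "\<And>c. AE \<omega> in M. Fc \<omega> c = real_cond_exp M G (indicator {\<omega>\<in>space M. e \<omega> \<le> c}) \<omega>"
    and hm: "\<And>c. (\<lambda>\<omega>. Fc \<omega> c) \<in> borel_measurable G"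
    and hb: "\<And>\<omega> x. \<omega> \<in> space M \<Longrightarrow> 0 \<le> Fc \<omega> x \<and> Fc \<omega> x \<le> 1"
    and hc: "\<And>\<omega> x. \<omega> \<in> space M \<Longrightarrow> isCont (Fc \<omega>) x"
    and Z: "Z \<in> borel_measurable G"
  shows "(\<lambda>\<omega>. Fc \<omega> (Z \<omega>)) \<in> borel_measurable G"
    and "A \<in> sets G \<Longrightarrow> (\<integral>\<omega>. indicator A \<omega> * indicator {\<omega>\<in>space M. e \<omega> \<le> Z \<omega>} \<omega> \<partial>M) = (\<integral>\<omega>. indicator A \<omega> * Fc \<omega> (Z \<omega>) \<partial>M)"
proof -
  have sp: "space G = space M" using sub by (simp add: subalgebra_def)
  define Zn where "Zn n \<omega> = real_of_int \<lceil>max (-real n) (min (real n) (Z \<omega>)) * 2^n\<rceil> / 2^n" for n \<omega>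
  have Znm: "Zn n \<in> borel_measurable G" for n unfolding Zn_def using Z by measurable
  have ZnV: "Zn n \<omega> \<in> (\<lambda>j. real_of_int j / 2^n) ` {-(int n * 2^n) .. int n * 2^n}" for n \<omega>
    unfolding Zn_def by (rule dyadic_approx(3))
  have Znl: "(\<lambda>n. Zn n \<omega>) \<longlonglongrightarrow> Z \<omega>" for \<omega>
    unfolding Zn_def by (rule dyadic_approx(2))
  have Zne: "eventually (\<lambda>n. Z \<omega> \<le> Zn n \<omega>) sequentially" for \<omega>
    unfolding Zn_def by (rule dyadic_approx(1))
  have Fn: "(\<lambda>\<omega>. Fc \<omega> (Zn n \<omega>)) \<in> borel_measurable G" for n
    by (rule cdf_finite(2)[OF M sub e hce hm hb Znm, where V="(\<lambda>j. real_of_int j / 2^n) ` {-(int n * 2^n) .. int n * 2^n}" and A="space M"])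
       (auto simp: ZnV sp[symmetric])
  have Fl: "(\<lambda>n. Fc \<omega> (Zn n \<omega>)) \<longlonglongrightarrow> Fc \<omega> (Z \<omega>)" if "\<omega> \<in> space M" for \<omega>
    using isCont_tendsto_compose[OF hc[OF that] Znl] .
  show FZ: "(\<lambda>\<omega>. Fc \<omega> (Z \<omega>)) \<in> borel_measurable G"
    by (rule borel_measurable_LIMSEQ_real[OF _ Fn]) (use Fl sp in auto)
  assume A: "A \<in> sets G"
  have AM: "A \<in> sets M" using A sub by (meson subalgebra_def subsetD)
  have ZM[measurable]: "Z \<in> borel_measurable M" using measurable_from_subalg[OF sub Z] .
  have ZnM[measurable]: "Zn n \<in> borel_measurable M" for n using measurable_from_subalg[OF sub Znm] .
  have FnM[measurable]: "(\<lambda>\<omega>. Fc \<omega> (Zn n \<omega>)) \<in> borel_measurable M" for n using measurable_from_subalg[OF sub Fn] .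
  have FZM[measurable]: "(\<lambda>\<omega>. Fc \<omega> (Z \<omega>)) \<in> borel_measurable M" using measurable_from_subalg[OF sub FZ] .
  note e[measurable] AM[measurable]
  show "(\<integral>\<omega>. indicator A \<omega> * indicator {\<omega>\<in>space M. e \<omega> \<le> Z \<omega>} \<omega> \<partial>M) = (\<integral>\<omega>. indicator A \<omega> * Fc \<omega> (Z \<omega>) \<partial>M)"
  proof (rule lim_int_eq[OF M])
    show "(\<lambda>\<omega>. (indicator A \<omega>::real) * indicator {\<omega>\<in>space M. e \<omega> \<le> Zn n \<omega>} \<omega>) \<in> borel_measurable M" for n
      by (intro ind_meas AM set_le_meas e ZnM)
    show "(\<lambda>\<omega>. (indicator A \<omega>::real) * indicator {\<omega>\<in>space M. e \<omega> \<le> Z \<omega>} \<omega>) \<in> borel_measurable M"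
      by (intro ind_meas AM set_le_meas e ZM)
    show "(\<lambda>\<omega>. (indicator A \<omega>::real) * Fc \<omega> (Zn n \<omega>)) \<in> borel_measurable M" for n
      by measurable
    show "(\<lambda>\<omega>. (indicator A \<omega>::real) * Fc \<omega> (Z \<omega>)) \<in> borel_measurable M"
      by measurable
    show "(\<lambda>n. (indicator A \<omega>::real) * indicator {\<omega>\<in>space M. e \<omega> \<le> Zn n \<omega>} \<omega>) \<longlonglongrightarrow>
          indicator A \<omega> * indicator {\<omega>\<in>space M. e \<omega> \<le> Z \<omega>} \<omega>" if "\<omega> \<in> space M" for \<omega>
    proof (cases "e \<omega> \<le> Z \<omega>")
      case True
      show ?thesis
        by (rule tendsto_eventually) (use Zne[of \<omega>] True that in \<open>auto elim!: eventually_mono simp: indicator_def\<close>)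
    next
      case False
      then have "eventually (\<lambda>n. Zn n \<omega> < e \<omega>) sequentially"
        using order_tendstoD(2)[OF Znl[of \<omega>]] by auto
      then show ?thesis
        by (intro tendsto_eventually) (use False that in \<open>auto elim!: eventually_mono simp: indicator_def\<close>)
    qed
    show "(\<lambda>n. (indicator A \<omega>::real) * Fc \<omega> (Zn n \<omega>)) \<longlonglongrightarrow> indicator A \<omega> * Fc \<omega> (Z \<omega>)" if "\<omega> \<in> space M" for \<omega>
      by (intro tendsto_mult tendsto_const Fl that)
    show "\<bar>(indicator A \<omega>::real) * indicator {\<omega>\<in>space M. e \<omega> \<le> Zn n \<omega>} \<omega>\<bar> \<le> 1" for n \<omega>
      by (auto simp: indicator_def)
    show "\<bar>(indicator A \<omega>::real) * Fc \<omega> (Zn n \<omega>)\<bar> \<le> 1" if "\<omega> \<in> space M" for n \<omega>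
      using hb[OF that, of "Zn n \<omega>"] by (auto simp: indicator_def)
    show "(\<integral>\<omega>. (indicator A \<omega>::real) * indicator {\<omega>\<in>space M. e \<omega> \<le> Zn n \<omega>} \<omega> \<partial>M) = (\<integral>\<omega>. indicator A \<omega> * Fc \<omega> (Zn n \<omega>) \<partial>M)" for n
      by (rule cdf_finite(1)[OF M sub e hce hm hb Znm, where V="(\<lambda>j. real_of_int j / 2^n) ` {-(int n * 2^n) .. int n * 2^n}" and A=A])
         (auto simp: ZnV A)
  qed
qed




lemma sat_sgn_L:
  fixes L l u U x z :: real
  assumes "L \<le> l" "l \<le> u" "u \<le> U" "\<not>(L = l \<and> l = u \<and> u = U)" "Sat L l u U x = L"
  shows "(if z > l then 1 else 0) \<le> sgn (Sat L l u U z - Sat L l u U x)"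
    and "sgn (Sat L l u U z - Sat L l u U x) \<le> (if z \<ge> l then 1 else 0)"
  using assms by (auto simp: Sat_def sgn_if split: if_splits)

lemma sat_sgn_U:
  fixes L l u U x z :: real
  assumes "L \<le> l" "l \<le> u" "u \<le> U" "\<not>(L = l \<and> l = u \<and> u = U)" "Sat L l u U x \<noteq> L" "Sat L l u U x = U"
  shows "-(if z \<le> u then 1 else 0) \<le> sgn (Sat L l u U z - Sat L l u U x)"
    and "sgn (Sat L l u U z - Sat L l u U x) \<le> -(if z < u then 1 else 0)"
  using assms by (auto simp: Sat_def sgn_if split: if_splits)

lemma sat_sgn_M:
  fixes L l u U x z :: real
  assumes "L \<le> l" "l \<le> u" "u \<le> U" "Sat L l u U x \<noteq> L" "Sat L l u U x \<noteq> U"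
  shows "sgn (Sat L l u U z - Sat L l u U x) = (if z > x then 1 else 0) - (if z < x then 1 else 0)"
  using assms by (auto simp: Sat_def sgn_if split: if_splits)


locale cdfctx =
  fixes M G :: "'a measure" and e :: "'a \<Rightarrow> real" and Fc :: "'a \<Rightarrow> real \<Rightarrow> real"
  assumes M: "prob_space M" and sub: "subalgebra M G"
    and e: "e \<in> borel_measurable M"
    and hce: "\<And>c. AE \<omega> in M. Fc \<omega> c = real_cond_exp M G (indicator {\<omega>\<in>space M. e \<omega> \<le> c}) \<omega>"
    and hm: "\<And>c. (\<lambda>\<omega>. Fc \<omega> c) \<in> borel_measurable G"
    and hb: "\<And>\<omega> x. \<omega> \<in> space M \<Longrightarrow> 0 \<le> Fc \<omega> x \<and> Fc \<omega> x \<le> 1"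
    and hc: "\<And>\<omega> x. \<omega> \<in> space M \<Longrightarrow> isCont (Fc \<omega>) x"
begin

lemma sp: "space G = space M" using sub by (simp add: subalgebra_def)
lemma GM: "A \<in> sets G \<Longrightarrow> A \<in> sets M" using sub by (meson subalgebra_def subsetD)
lemma GMm: "f \<in> borel_measurable G \<Longrightarrow> f \<in> borel_measurable M" using measurable_from_subalg[OF sub] .

lemma FZm: "Z \<in> borel_measurable G \<Longrightarrow> (\<lambda>\<omega>. Fc \<omega> (Z \<omega>)) \<in> borel_measurable G"
  by (rule cdf_gen(1)[OF M sub e hce hm hb hc])

lemma le_eq: "Z \<in> borel_measurable G \<Longrightarrow> A \<in> sets G \<Longrightarrow>
   (\<integral>\<omega>. indicator A \<omega> * indicator {\<omega>\<in>space M. e \<omega> \<le> Z \<omega>} \<omega> \<partial>M) = (\<integral>\<omega>. indicator A \<omega> * Fc \<omega> (Z \<omega>) \<partial>M)"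
  by (rule cdf_gen(2)[OF M sub e hce hm hb hc])

lemma less_eq: 
  assumes Z: "Z \<in> borel_measurable G" and A: "A \<in> sets G"
  shows "(\<integral>\<omega>. indicator A \<omega> * indicator {\<omega>\<in>space M. e \<omega> < Z \<omega>} \<omega> \<partial>M) = (\<integral>\<omega>. indicator A \<omega> * Fc \<omega> (Z \<omega>) \<partial>M)"
proof -
  define Zn where "Zn n \<omega> = Z \<omega> - 1 / real (Suc n)" for n \<omega>
  have Znm: "Zn n \<in> borel_measurable G" for n unfolding Zn_def using Z by measurable
  have Znl: "(\<lambda>n. Zn n \<omega>) \<longlonglongrightarrow> Z \<omega>" for \<omega>
    unfolding Zn_def using tendsto_diff[OF tendsto_const[of "Z \<omega>"] LIMSEQ_Suc[OF lim_1_over_n]] by simp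
  have AM: "A \<in> sets M" using GM[OF A] .
  have ZM: "Z \<in> borel_measurable M" using GMm[OF Z] .
  have ZnM: "Zn n \<in> borel_measurable M" for n using GMm[OF Znm] .
  have FnM[measurable]: "(\<lambda>\<omega>. Fc \<omega> (Zn n \<omega>)) \<in> borel_measurable M" for n using GMm[OF FZm[OF Znm]] .
  have FZM[measurable]: "(\<lambda>\<omega>. Fc \<omega> (Z \<omega>)) \<in> borel_measurable M" using GMm[OF FZm[OF Z]] .
  note AM[measurable]
  show ?thesis
  proof (rule lim_int_eq[OF M])
    show "(\<lambda>\<omega>. (indicator A \<omega>::real) * indicator {\<omega>\<in>space M. e \<omega> \<le> Zn n \<omega>} \<omega>) \<in> borel_measurable M" for n
      by (intro ind_meas AM set_le_meas e ZnM)
    show "(\<lambda>\<omega>. (indicator A \<omega>::real) * indicator {\<omega>\<in>space M. e \<omega> < Z \<omega>} \<omega>) \<in> borel_measurable M"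
      by (intro ind_meas AM set_le_meas e ZM)
    show "(\<lambda>\<omega>. (indicator A \<omega>::real) * Fc \<omega> (Zn n \<omega>)) \<in> borel_measurable M" for n
      by measurable
    show "(\<lambda>\<omega>. (indicator A \<omega>::real) * Fc \<omega> (Z \<omega>)) \<in> borel_measurable M"
      by measurable
    show "(\<lambda>n. (indicator A \<omega>::real) * indicator {\<omega>\<in>space M. e \<omega> \<le> Zn n \<omega>} \<omega>) \<longlonglongrightarrow>
          indicator A \<omega> * indicator {\<omega>\<in>space M. e \<omega> < Z \<omega>} \<omega>" if "\<omega> \<in> space M" for \<omega>
    proof (cases "e \<omega> < Z \<omega>")
      case True
      then have "eventually (\<lambda>n. e \<omega> < Zn n \<omega>) sequentially"
        using order_tendstoD(1)[OF Znl[of \<omega>]] by auto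
      then show ?thesis
        by (intro tendsto_eventually) (use True that in \<open>auto elim!: eventually_mono simp: indicator_def\<close>)
    next
      case False
      have "e \<omega> > Zn n \<omega>" for n
      proof -
        have "0 < 1 / real (Suc n)" by simp
        then show ?thesis using False unfolding Zn_def by linarith
      qed
      then show ?thesis
        by (intro tendsto_eventually) (use False that in \<open>auto simp: indicator_def not_le\<close>)
    qed
    show "(\<lambda>n. (indicator A \<omega>::real) * Fc \<omega> (Zn n \<omega>)) \<longlonglongrightarrow> indicator A \<omega> * Fc \<omega> (Z \<omega>)" if "\<omega> \<in> space M" for \<omega>
      by (intro tendsto_mult tendsto_const isCont_tendsto_compose[OF hc[OF that] Znl])
    show "\<bar>(indicator A \<omega>::real) * indicator {\<omega>\<in>space M. e \<omega> \<le> Zn n \<omega>} \<omega>\<bar> \<le> 1" for n \<omega>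
      by (auto simp: indicator_def)
    show "\<bar>(indicator A \<omega>::real) * Fc \<omega> (Zn n \<omega>)\<bar> \<le> 1" if "\<omega> \<in> space M" for n \<omega>
      using hb[OF that, of "Zn n \<omega>"] by (auto simp: indicator_def)
    show "(\<integral>\<omega>. (indicator A \<omega>::real) * indicator {\<omega>\<in>space M. e \<omega> \<le> Zn n \<omega>} \<omega> \<partial>M) = (\<integral>\<omega>. indicator A \<omega> * Fc \<omega> (Zn n \<omega>) \<partial>M)" for n
      by (rule le_eq[OF Znm A])
  qed
qed


lemma D_gen:
  assumes Z: "Z \<in> borel_measurable G" and A: "A \<in> sets G" and B: "B \<in> sets G"
    and S: "S \<in> sets M"
    and eqA: "\<And>A. A \<in> sets G \<Longrightarrow> (\<integral>\<omega>. indicator A \<omega> * indicator S \<omega> \<partial>M) = (\<integral>\<omega>. indicator A \<omega> * Fc \<omega> (Z \<omega>) \<partial>M)"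
  shows "integrable M (\<lambda>\<omega>. indicator A \<omega> * (indicator B \<omega> * (indicator S \<omega> - Fc \<omega> (Z \<omega>))))"
    and "(\<integral>\<omega>. indicator A \<omega> * (indicator B \<omega> * (indicator S \<omega> - Fc \<omega> (Z \<omega>))) \<partial>M) = 0"
proof -
  interpret prob_space M by (rule M)
  have AM[measurable]: "A \<in> sets M" "B \<in> sets M" using GM A B by auto
  have AB: "A \<inter> B \<in> sets G" using A B by auto
  note S[measurable]
  have FZ[measurable]: "(\<lambda>\<omega>. Fc \<omega> (Z \<omega>)) \<in> borel_measurable M" using GMm[OF FZm[OF Z]] .
  have i1: "integrable M (\<lambda>\<omega>. indicator (A \<inter> B) \<omega> * indicator S \<omega> :: real)"
    by (rule integrable_const_bound[where B=1]) (auto simp: indicator_def)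
  have i2: "integrable M (\<lambda>\<omega>. indicator (A \<inter> B) \<omega> * Fc \<omega> (Z \<omega>))"
    by (rule integrable_const_bound[where B=1]) (use hb in \<open>auto simp: indicator_def\<close>)
  have eq: "(\<lambda>\<omega>. indicator A \<omega> * (indicator B \<omega> * (indicator S \<omega> - Fc \<omega> (Z \<omega>))))
      = (\<lambda>\<omega>. indicator (A \<inter> B) \<omega> * indicator S \<omega> - indicator (A \<inter> B) \<omega> * Fc \<omega> (Z \<omega>))"
    by (auto simp: indicator_def fun_eq_iff)
  show "integrable M (\<lambda>\<omega>. indicator A \<omega> * (indicator B \<omega> * (indicator S \<omega> - Fc \<omega> (Z \<omega>))))"
    unfolding eq using i1 i2 by simp
  show "(\<integral>\<omega>. indicator A \<omega> * (indicator B \<omega> * (indicator S \<omega> - Fc \<omega> (Z \<omega>))) \<partial>M) = 0"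
    unfolding eq using i1 i2 eqA[OF AB] by simp
qed

lemma Dle:
  assumes Z: "Z \<in> borel_measurable G" and A: "A \<in> sets G" and B: "B \<in> sets G"
  shows "integrable M (\<lambda>\<omega>. indicator A \<omega> * (indicator B \<omega> * (indicator {\<omega>\<in>space M. e \<omega> \<le> Z \<omega>} \<omega> - Fc \<omega> (Z \<omega>))))"
    and "(\<integral>\<omega>. indicator A \<omega> * (indicator B \<omega> * (indicator {\<omega>\<in>space M. e \<omega> \<le> Z \<omega>} \<omega> - Fc \<omega> (Z \<omega>))) \<partial>M) = 0"
  by (rule D_gen[OF Z A B set_le_meas(1)[OF e GMm[OF Z]] le_eq[OF Z]], assumption)+

lemma Dlt:
  assumes Z: "Z \<in> borel_measurable G" and A: "A \<in> sets G" and B: "B \<in> sets G"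
  shows "integrable M (\<lambda>\<omega>. indicator A \<omega> * (indicator B \<omega> * (indicator {\<omega>\<in>space M. e \<omega> < Z \<omega>} \<omega> - Fc \<omega> (Z \<omega>))))"
    and "(\<integral>\<omega>. indicator A \<omega> * (indicator B \<omega> * (indicator {\<omega>\<in>space M. e \<omega> < Z \<omega>} \<omega> - Fc \<omega> (Z \<omega>))) \<partial>M) = 0"
  by (rule D_gen[OF Z A B set_le_meas(2)[OF e GMm[OF Z]] less_eq[OF Z]], assumption)+


end




context cdfctx begin

definition "dT B S Z \<omega> = (indicator B \<omega> :: real) * (indicator S \<omega> - Fc \<omega> (Z \<omega>))"

lemma sgn_condexp:
  fixes p x L l u U :: "'a \<Rightarrow> real"
  assumes mG[measurable]: "p \<in> borel_measurable G" "x \<in> borel_measurable G" "L \<in> borel_measurable G"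
     "l \<in> borel_measurable G" "u \<in> borel_measurable G" "U \<in> borel_measurable G"
    and ord: "AE \<omega> in M. L \<omega> \<le> l \<omega> \<and> l \<omega> \<le> u \<omega> \<and> u \<omega> \<le> U \<omega> \<and> \<not>(L \<omega> = l \<omega> \<and> l \<omega> = u \<omega> \<and> u \<omega> = U \<omega>)"
  shows "AE \<omega> in M. real_cond_exp M G (\<lambda>\<omega>. sgn (Sat (L \<omega>) (l \<omega>) (u \<omega>) (U \<omega>) (p \<omega> + e \<omega>) - Sat (L \<omega>) (l \<omega>) (u \<omega>) (U \<omega>) (x \<omega>))) \<omega>
     = (if Sat (L \<omega>) (l \<omega>) (u \<omega>) (U \<omega>) (x \<omega>) = L \<omega> then 1 - Fc \<omega> (l \<omega> - p \<omega>)
        else if Sat (L \<omega>) (l \<omega>) (u \<omega>) (U \<omega>) (x \<omega>) = U \<omega> then - Fc \<omega> (u \<omega> - p \<omega>)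
        else 1 - 2 * Fc \<omega> (x \<omega> - p \<omega>))"
proof -
  interpret prob_space M by (rule M)
  define sv where "sv \<omega> = Sat (L \<omega>) (l \<omega>) (u \<omega>) (U \<omega>) (x \<omega>)" for \<omega>
  have svG[measurable]: "sv \<in> borel_measurable G" unfolding sv_def Sat_def by measurable
  define SL where "SL = {\<omega>\<in>space G. sv \<omega> = L \<omega>}"
  define SU where "SU = {\<omega>\<in>space G. sv \<omega> \<noteq> L \<omega> \<and> sv \<omega> = U \<omega>}"
  define SM where "SM = {\<omega>\<in>space G. sv \<omega> \<noteq> L \<omega> \<and> sv \<omega> \<noteq> U \<omega>}"
  have SG: "SL \<in> sets G" "SU \<in> sets G" "SM \<in> sets G"
  proof -
    show "SL \<in> sets G" unfolding SL_def by (rule borel_measurable_eq; fact)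
    have "SU = {\<omega>\<in>space G. sv \<omega> \<noteq> L \<omega>} \<inter> {\<omega>\<in>space G. sv \<omega> = U \<omega>}" by (auto simp: SU_def)
    then show "SU \<in> sets G" using borel_measurable_neq[OF svG mG(3)] borel_measurable_eq[OF svG mG(6)] by auto
    have "SM = {\<omega>\<in>space G. sv \<omega> \<noteq> L \<omega>} \<inter> {\<omega>\<in>space G. sv \<omega> \<noteq> U \<omega>}" by (auto simp: SM_def)
    then show "SM \<in> sets G" using borel_measurable_neq[OF svG mG(3)] borel_measurable_neq[OF svG mG(6)] by auto
  qed
  define aL where "aL \<omega> = l \<omega> - p \<omega>" for \<omega>
  define aU where "aU \<omega> = u \<omega> - p \<omega>" for \<omega>
  define aM where "aM \<omega> = x \<omega> - p \<omega>" for \<omega>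
  have aG: "aL \<in> borel_measurable G" "aU \<in> borel_measurable G" "aM \<in> borel_measurable G"
    unfolding aL_def aU_def aM_def by (intro borel_measurable_diff mG)+
  define le where "le Z = {\<omega>\<in>space M. e \<omega> \<le> Z \<omega>}" for Z :: "'a \<Rightarrow> real"
  define lt where "lt Z = {\<omega>\<in>space M. e \<omega> < Z \<omega>}" for Z :: "'a \<Rightarrow> real"
  define g where "g \<omega> = indicator SL \<omega> * (1 - Fc \<omega> (aL \<omega>)) - indicator SU \<omega> * Fc \<omega> (aU \<omega>)
      + indicator SM \<omega> * (1 - 2 * Fc \<omega> (aM \<omega>))" for \<omega>
  define f where "f \<omega> = sgn (Sat (L \<omega>) (l \<omega>) (u \<omega>) (U \<omega>) (p \<omega> + e \<omega>) - sv \<omega>)" for \<omega>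
  define lo where "lo \<omega> = g \<omega> - dT SL (le aL) aL \<omega> - dT SU (le aU) aU \<omega> - dT SM (le aM) aM \<omega> - dT SM (lt aM) aM \<omega>" for \<omega>
  define hi where "hi \<omega> = g \<omega> - dT SL (lt aL) aL \<omega> - dT SU (lt aU) aU \<omega> - dT SM (le aM) aM \<omega> - dT SM (lt aM) aM \<omega>" for \<omega>
  have sp': "space G = space M" by (rule sp)
  have part: "\<omega> \<in> space M \<Longrightarrow> (\<omega> \<in> SL \<and> \<omega> \<notin> SU \<and> \<omega> \<notin> SM) \<or> (\<omega> \<notin> SL \<and> \<omega> \<in> SU \<and> \<omega> \<notin> SM) \<or> (\<omega> \<notin> SL \<and> \<omega> \<notin> SU \<and> \<omega> \<in> SM)" for \<omega>
    unfolding SL_def SU_def SM_def sp' by auto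
  have sand: "AE \<omega> in M. lo \<omega> \<le> f \<omega> \<and> f \<omega> \<le> hi \<omega>"
  proof (rule AE_mp[OF ord], intro AE_I2 impI)
    fix \<omega> assume \<omega>: "\<omega> \<in> space M" and o: "L \<omega> \<le> l \<omega> \<and> l \<omega> \<le> u \<omega> \<and> u \<omega> \<le> U \<omega> \<and> \<not>(L \<omega> = l \<omega> \<and> l \<omega> = u \<omega> \<and> u \<omega> = U \<omega>)"
    consider (cL) "\<omega> \<in> SL" "\<omega> \<notin> SU" "\<omega> \<notin> SM" | (cU) "\<omega> \<notin> SL" "\<omega> \<in> SU" "\<omega> \<notin> SM"
      | (cM) "\<omega> \<notin> SL" "\<omega> \<notin> SU" "\<omega> \<in> SM" using part[OF \<omega>] by blast
    then show "lo \<omega> \<le> f \<omega> \<and> f \<omega> \<le> hi \<omega>"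
    proof cases
      case cL
      then have s: "sv \<omega> = L \<omega>" by (simp add: SL_def)
      have lo: "lo \<omega> = 1 - indicator (le aL) \<omega>" "hi \<omega> = 1 - indicator (lt aL) \<omega>"
        using cL by (simp_all add: lo_def hi_def g_def dT_def)
      have i: "indicator (le aL) \<omega> = (if l \<omega> < p \<omega> + e \<omega> then 0 else 1)"
        "indicator (lt aL) \<omega> = (if l \<omega> \<le> p \<omega> + e \<omega> then 0 else 1)"
        using \<omega> by (auto simp: le_def lt_def aL_def indicator_def)
      show ?thesis using sat_sgn_L[of "L \<omega>" "l \<omega>" "u \<omega>" "U \<omega>" "x \<omega>" "p \<omega> + e \<omega>"] o s
        unfolding lo i f_def sv_def by auto
    next
      case cU
      then have s: "sv \<omega> \<noteq> L \<omega>" "sv \<omega> = U \<omega>" by (simp_all add: SU_def)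
      have lo: "lo \<omega> = - indicator (le aU) \<omega>" "hi \<omega> = - indicator (lt aU) \<omega>"
        using cU by (simp_all add: lo_def hi_def g_def dT_def)
      have i: "indicator (le aU) \<omega> = (if p \<omega> + e \<omega> \<le> u \<omega> then 1 else 0)"
        "indicator (lt aU) \<omega> = (if p \<omega> + e \<omega> < u \<omega> then 1 else 0)"
        using \<omega> by (auto simp: le_def lt_def aU_def indicator_def)
      show ?thesis using sat_sgn_U[of "L \<omega>" "l \<omega>" "u \<omega>" "U \<omega>" "x \<omega>" "p \<omega> + e \<omega>"] o s
        unfolding lo i f_def sv_def by auto
    next
      case cM
      then have s: "sv \<omega> \<noteq> L \<omega>" "sv \<omega> \<noteq> U \<omega>" by (simp_all add: SM_def)
      have lo: "lo \<omega> = 1 - indicator (le aM) \<omega> - indicator (lt aM) \<omega>" "hi \<omega> = 1 - indicator (le aM) \<omega> - indicator (lt aM) \<omega>"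
        using cM by (simp_all add: lo_def hi_def g_def dT_def)
      have i: "indicator (le aM) \<omega> = (if p \<omega> + e \<omega> \<le> x \<omega> then 1 else 0)"
        "indicator (lt aM) \<omega> = (if p \<omega> + e \<omega> < x \<omega> then 1 else 0)"
        using \<omega> by (auto simp: le_def lt_def aM_def indicator_def)
      show ?thesis using sat_sgn_M[of "L \<omega>" "l \<omega>" "u \<omega>" "U \<omega>" "x \<omega>" "p \<omega> + e \<omega>"] o s
        unfolding lo i f_def sv_def by auto
    qed
  qed
  have SM': "SL \<in> sets M" "SU \<in> sets M" "SM \<in> sets M" using SG GM by auto
  have FaG: "(\<lambda>\<omega>. Fc \<omega> (aL \<omega>)) \<in> borel_measurable G" "(\<lambda>\<omega>. Fc \<omega> (aU \<omega>)) \<in> borel_measurable G"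
     "(\<lambda>\<omega>. Fc \<omega> (aM \<omega>)) \<in> borel_measurable G" using FZm aG by auto
  have gG: "g \<in> borel_measurable G" unfolding g_def using SG FaG by measurable
  have gM[measurable]: "g \<in> borel_measurable M" using GMm[OF gG] .
  have gb: "\<bar>g \<omega>\<bar> \<le> 1" if "\<omega> \<in> space M" for \<omega>
  proof -
    have h: "0 \<le> Fc \<omega> y \<and> Fc \<omega> y \<le> 1" for y using hb[OF that] .
    show ?thesis using part[OF that] h[of "aL \<omega>"] h[of "aU \<omega>"] h[of "aM \<omega>"]
      unfolding g_def by (auto simp: indicator_def)
  qed
  have pM[measurable]: "p \<in> borel_measurable M" "x \<in> borel_measurable M" "L \<in> borel_measurable M"
     "l \<in> borel_measurable M" "u \<in> borel_measurable M" "U \<in> borel_measurable M"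
    by (rule GMm, rule mG)+
  note e[measurable]
  have svM[measurable]: "sv \<in> borel_measurable M" using GMm[OF svG] .
  have fM[measurable]: "f \<in> borel_measurable M" unfolding f_def Sat_def by measurable
  have fb: "\<bar>f \<omega>\<bar> \<le> 1" for \<omega> unfolding f_def by (simp add: sgn_if)
  have intf: "integrable M f" by (rule integrable_const_bound[where B=1]) (auto simp: fb)
  have intg: "integrable M g" by (rule integrable_const_bound[where B=1]) (use gb in auto)
  have key: "(\<integral>\<omega>. indicator A \<omega> * f \<omega> \<partial>M) = (\<integral>\<omega>. indicator A \<omega> * g \<omega> \<partial>M)" if A: "A \<in> sets G" for A
  proof -
    have AM[measurable]: "A \<in> sets M" using GM[OF A] .
    have iAg: "integrable M (\<lambda>\<omega>. indicator A \<omega> * g \<omega>)"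
      by (rule integrable_const_bound[where B=1]) (use gb in \<open>auto simp: indicator_def\<close>)
    have iAf: "integrable M (\<lambda>\<omega>. indicator A \<omega> * f \<omega>)"
      by (rule integrable_const_bound[where B=1]) (use fb in \<open>auto simp: indicator_def\<close>)
    note D = Dle[OF aG(1) A SG(1)] Dle[OF aG(2) A SG(2)] Dle[OF aG(3) A SG(3)] Dlt[OF aG(3) A SG(3)]
       Dlt[OF aG(1) A SG(1)] Dlt[OF aG(2) A SG(2)]
    note D' = D[folded le_def lt_def, unfolded dT_def[symmetric]]
    have lo_eq: "(\<integral>\<omega>. indicator A \<omega> * lo \<omega> \<partial>M) = (\<integral>\<omega>. indicator A \<omega> * g \<omega> \<partial>M)"
    proof -
      have "(\<lambda>\<omega>. indicator A \<omega> * lo \<omega>) = (\<lambda>\<omega>. indicator A \<omega> * g \<omega> - indicator A \<omega> * dT SL (le aL) aL \<omega>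
         - indicator A \<omega> * dT SU (le aU) aU \<omega> - indicator A \<omega> * dT SM (le aM) aM \<omega> - indicator A \<omega> * dT SM (lt aM) aM \<omega>)"
        by (simp add: lo_def fun_eq_iff algebra_simps)
      then show ?thesis using D' iAg by simp
    qed
    have hi_eq: "(\<integral>\<omega>. indicator A \<omega> * hi \<omega> \<partial>M) = (\<integral>\<omega>. indicator A \<omega> * g \<omega> \<partial>M)"
    proof -
      have "(\<lambda>\<omega>. indicator A \<omega> * hi \<omega>) = (\<lambda>\<omega>. indicator A \<omega> * g \<omega> - indicator A \<omega> * dT SL (lt aL) aL \<omega>
         - indicator A \<omega> * dT SU (lt aU) aU \<omega> - indicator A \<omega> * dT SM (le aM) aM \<omega> - indicator A \<omega> * dT SM (lt aM) aM \<omega>)"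
        by (simp add: hi_def fun_eq_iff algebra_simps)
      then show ?thesis using D' iAg by simp
    qed
    have iAlo: "integrable M (\<lambda>\<omega>. indicator A \<omega> * lo \<omega>)"
    proof -
      have "(\<lambda>\<omega>. indicator A \<omega> * lo \<omega>) = (\<lambda>\<omega>. indicator A \<omega> * g \<omega> - indicator A \<omega> * dT SL (le aL) aL \<omega>
         - indicator A \<omega> * dT SU (le aU) aU \<omega> - indicator A \<omega> * dT SM (le aM) aM \<omega> - indicator A \<omega> * dT SM (lt aM) aM \<omega>)"
        by (simp add: lo_def fun_eq_iff algebra_simps)
      then show ?thesis using D' iAg by simp
    qed
    have iAhi: "integrable M (\<lambda>\<omega>. indicator A \<omega> * hi \<omega>)"
    proof -
      have "(\<lambda>\<omega>. indicator A \<omega> * hi \<omega>) = (\<lambda>\<omega>. indicator A \<omega> * g \<omega> - indicator A \<omega> * dT SL (lt aL) aL \<omega>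
         - indicator A \<omega> * dT SU (lt aU) aU \<omega> - indicator A \<omega> * dT SM (le aM) aM \<omega> - indicator A \<omega> * dT SM (lt aM) aM \<omega>)"
        by (simp add: hi_def fun_eq_iff algebra_simps)
      then show ?thesis using D' iAg by simp
    qed
    have "(\<integral>\<omega>. indicator A \<omega> * lo \<omega> \<partial>M) \<le> (\<integral>\<omega>. indicator A \<omega> * f \<omega> \<partial>M)"
      by (rule integral_mono_AE[OF iAlo iAf]) (use sand in \<open>eventually_elim, auto simp: indicator_def\<close>)
    moreover have "(\<integral>\<omega>. indicator A \<omega> * f \<omega> \<partial>M) \<le> (\<integral>\<omega>. indicator A \<omega> * hi \<omega> \<partial>M)"
      by (rule integral_mono_AE[OF iAf iAhi]) (use sand in \<open>eventually_elim, auto simp: indicator_def\<close>)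
    ultimately show ?thesis using lo_eq hi_eq by linarith
  qed
  interpret finite_measure_subalgebra M G
    by (simp add: finite_measure_subalgebra_def finite_measure_subalgebra_axioms_def sub finite_measure_axioms)
  have ce: "AE \<omega> in M. real_cond_exp M G f \<omega> = g \<omega>"
  proof (rule real_cond_exp_charact)
    fix A assume "A \<in> sets G"
    then show "(\<integral>\<omega>\<in>A. f \<omega> \<partial>M) = (\<integral>\<omega>\<in>A. g \<omega> \<partial>M)"
      using key by (simp add: set_lebesgue_integral_def)
  qed (use intf intg gG in auto)
  have feq: "(\<lambda>\<omega>. sgn (Sat (L \<omega>) (l \<omega>) (u \<omega>) (U \<omega>) (p \<omega> + e \<omega>) - Sat (L \<omega>) (l \<omega>) (u \<omega>) (U \<omega>) (x \<omega>))) = f"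
    by (simp add: f_def sv_def fun_eq_iff)
  show ?thesis unfolding feq using ce AE_space
  proof eventually_elim
    case (elim \<omega>)
    then show ?case using part[OF elim(2)]
      by (auto simp: g_def SL_def SU_def SM_def sv_def aL_def aU_def aM_def indicator_def)
  qed
qed

end




locale cdfan =
  fixes F f :: "real \<Rightarrow> real"
  assumes mono: "mono F" and bot: "(F \<longlongrightarrow> 0) at_bot" and top: "(F \<longlongrightarrow> 1) at_top"
    and fc: "continuous_on UNIV f" and fnn: "\<And>x. 0 \<le> f x"
    and fi: "\<And>x. (f has_integral F x) {..x}"
begin

lemma fint: "f integrable_on {a..b}"
  by (rule integrable_continuous_real) (rule continuous_on_subset[OF fc], simp)

lemma Fdiff: assumes "a \<le> y" shows "F y = F a + integral {a..y} f"
proof -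
  have "(f has_integral (F a + integral {a..y} f)) ({..a} \<union> {a..y})"
  proof (rule has_integral_Un[OF fi integrable_integral[OF fint]])
    have "{..a} \<inter> {a..y} = {a}" using assms by auto
    then show "negligible ({..a} \<inter> {a..y})" by simp
  qed
  moreover have "{..a} \<union> {a..y} = {..y}" using assms by auto
  ultimately show ?thesis using fi[of y] has_integral_unique by metis
qed

lemma F01: "0 \<le> F x \<and> F x \<le> 1"
proof
  show "0 \<le> F x" using has_integral_nonneg[OF fi[of x]] fnn by auto
  have "eventually (\<lambda>y. F x \<le> F y) at_top"
    using mono by (auto simp: eventually_at_top_linorder mono_def intro!: exI[of _ x])
  then show "F x \<le> 1" using tendsto_lowerbound[OF top] by auto
qed

lemma Flip: assumes "a \<le> b" "\<And>y. y \<in> {a..b} \<Longrightarrow> f y \<le> c"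
  shows "0 \<le> F b - F a \<and> F b - F a \<le> c * (b - a)"
proof -
  have "F b - F a = integral {a..b} f" using Fdiff[OF assms(1)] by simp
  moreover have "integral {a..b} f \<le> integral {a..b} (\<lambda>_. c)"
    by (rule integral_le[OF fint]) (use assms(2) in auto)
  moreover have "0 \<le> integral {a..b} f" by (rule integral_nonneg[OF fint]) (use fnn in auto)
  ultimately show ?thesis using assms(1) by (simp add: mult.commute)
qed

lemma Fcont: "isCont F x"
proof -
  have "continuous_on {x-1..x+1} (\<lambda>y. F (x-1) + integral {x-1..y} f)"
    by (intro continuous_intros indefinite_integral_continuous_1 fint)
  then have "continuous_on {x-1..x+1} F"
    by (rule continuous_on_eq) (use Fdiff in auto)
  then show ?thesis by (rule continuous_on_interior) auto
qed

lemma fderiv: "(\<lambda>n. (F (y + 1 / real (Suc n)) - F y) / (1 / real (Suc n))) \<longlonglongrightarrow> f y"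
proof -
  have d: "((\<lambda>u. integral {y..u} f) has_real_derivative f y) (at y within {y..y+1})"
    by (rule integral_has_real_derivative) (auto intro: continuous_on_subset[OF fc])
  then have "((\<lambda>u. (integral {y..u} f - integral {y..y} f) / (u - y)) \<longlongrightarrow> f y) (at y within {y..y+1})"
    by (simp add: has_field_derivative_iff)
  moreover have "filterlim (\<lambda>n. y + 1 / real (Suc n)) (at y within {y..y+1}) sequentially"
  proof (subst filterlim_at, intro conjI)
    show "\<forall>\<^sub>F n in sequentially. y + 1 / real (Suc n) \<in> {y..y + 1} \<and> y + 1 / real (Suc n) \<noteq> y"
      by (auto simp: divide_le_eq_1)
    show "(\<lambda>n. y + 1 / real (Suc n)) \<longlonglongrightarrow> y"
      using tendsto_add[OF tendsto_const[of y] LIMSEQ_Suc[OF lim_1_over_n]] by simp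
  qed
  ultimately have "(\<lambda>n. (integral {y..y + 1 / real (Suc n)} f - integral {y..y} f) / (y + 1 / real (Suc n) - y)) \<longlonglongrightarrow> f y"
    by (rule filterlim_compose)
  moreover have "(integral {y..y + 1 / real (Suc n)} f - integral {y..y} f) / (y + 1 / real (Suc n) - y)
      = (F (y + 1 / real (Suc n)) - F y) / (1 / real (Suc n))" for n
    using Fdiff[of y "y + 1 / real (Suc n)"] by simp
  ultimately show ?thesis by simp
qed

end


lemma carath_meas:
  fixes h :: "'a \<Rightarrow> real \<Rightarrow> real" and Z :: "'a \<Rightarrow> real"
  assumes hm: "\<And>y. (\<lambda>\<omega>. h \<omega> y) \<in> borel_measurable G"
    and hc: "\<And>\<omega> y. \<omega> \<in> space G \<Longrightarrow> isCont (h \<omega>) y"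
    and Z: "Z \<in> borel_measurable G"
  shows "(\<lambda>\<omega>. h \<omega> (Z \<omega>)) \<in> borel_measurable G"
proof -
  define Zn where "Zn n \<omega> = real_of_int \<lceil>max (-real n) (min (real n) (Z \<omega>)) * 2^n\<rceil> / 2^n" for n \<omega>
  have Znm[measurable]: "Zn n \<in> borel_measurable G" for n unfolding Zn_def using Z by measurable
  define V where "V n = (\<lambda>j. real_of_int j / 2^n) ` {-(int n * 2^n) .. int n * 2^n}" for n
  have ZnV: "Zn n \<omega> \<in> V n" for n \<omega>
    unfolding Zn_def V_def by (rule dyadic_approx(3))
  have Znl: "(\<lambda>n. Zn n \<omega>) \<longlonglongrightarrow> Z \<omega>" for \<omega>
    unfolding Zn_def by (rule dyadic_approx(2))
  have Vf: "finite (V n)" for n unfolding V_def by simp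
  have Fn: "(\<lambda>\<omega>. h \<omega> (Zn n \<omega>)) \<in> borel_measurable G" for n
  proof -
    define B where "B v = {\<omega>\<in>space G. Zn n \<omega> = v}" for v
    have BG[measurable]: "B v \<in> sets G" for v unfolding B_def by measurable
    have r: "h \<omega> (Zn n \<omega>) = (\<Sum>v\<in>V n. (indicator (B v) \<omega>::real) * h \<omega> v)" if "\<omega> \<in> space G" for \<omega>
    proof -
      have "(\<Sum>v\<in>V n. (indicator (B v) \<omega>::real) * h \<omega> v) = (\<Sum>v\<in>V n. (if Zn n \<omega> = v then 1 else 0) * h \<omega> v)"
        using that by (intro sum.cong) (auto simp: B_def indicator_def)
      then show ?thesis using sum_delta_ind[OF Vf ZnV] by simp
    qed
    show ?thesis
      apply (subst measurable_cong[where g="\<lambda>\<omega>. (\<Sum>v\<in>V n. indicator (B v) \<omega> * h \<omega> v)"])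
      using r apply simp
      using hm by measurable
  qed
  show ?thesis
  proof (rule borel_measurable_LIMSEQ_real[where u="\<lambda>n \<omega>. h \<omega> (Zn n \<omega>)"])
    show "(\<lambda>n. h \<omega> (Zn n \<omega>)) \<longlonglongrightarrow> h \<omega> (Z \<omega>)" if "\<omega> \<in> space G" for \<omega>
      using isCont_tendsto_compose[OF hc[OF that] Znl] .
  qed (rule Fn)
qed

lemma inf_dense:
  fixes g :: "'b::{metric_space, second_countable_topology} \<Rightarrow> real"
  assumes gc: "continuous_on S g" and S: "compact S" "S \<noteq> {}" and T: "T \<subseteq> S" "S \<subseteq> closure T"
  shows "(INF x\<in>S. g x) = (INF x\<in>T. g x)"
proof -
  have bS: "bdd_below (g ` S)"
    using compact_imp_bounded[OF compact_continuous_image[OF gc S(1)]] by (rule bounded_imp_bdd_below)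
  have bT: "bdd_below (g ` T)" using bS T(1) by (meson bdd_below_mono image_mono)
  have Tne: "T \<noteq> {}" using S(2) T(2) by auto
  have "(INF x\<in>T. g x) \<le> g x" if x: "x \<in> S" for x
  proof -
    obtain t where t: "\<And>n. t n \<in> T" "t \<longlonglongrightarrow> x" using T(2) x closure_sequential by blast
    have ev: "eventually (\<lambda>n. t n \<in> S) sequentially" using t(1) T(1) by (intro always_eventually) auto
    have "(\<lambda>n. g (t n)) \<longlonglongrightarrow> g x"
      using continuous_on_tendsto_compose[OF gc t(2) x ev] .
    moreover have "(INF x\<in>T. g x) \<le> g (t n)" for n using t(1) bT by (intro cINF_lower) auto
    ultimately show ?thesis by (intro LIMSEQ_le_const) auto
  qed
  then have "(INF x\<in>T. g x) \<le> (INF x\<in>S. g x)" by (intro cINF_greatest S(2))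
  moreover have "(INF x\<in>S. g x) \<le> (INF x\<in>T. g x)" by (rule cINF_superset_mono[OF Tne bS T(1)]) simp
  ultimately show ?thesis by simp
qed

lemma inf_meas:
  fixes h :: "'a \<Rightarrow> real \<Rightarrow> real" and r :: "'a \<Rightarrow> real"
  assumes hm: "\<And>y. (\<lambda>\<omega>. h \<omega> y) \<in> borel_measurable G"
    and hc: "\<And>\<omega> y. \<omega> \<in> space G \<Longrightarrow> isCont (h \<omega>) y"
    and r: "r \<in> borel_measurable G" and r0: "\<And>\<omega>. \<omega> \<in> space G \<Longrightarrow> 0 \<le> r \<omega>"
  shows "(\<lambda>\<omega>. Inf (h \<omega> ` {x. \<bar>x\<bar> \<le> r \<omega>})) \<in> borel_measurable G"
proof -
  obtain T :: "real set" where T: "countable T" "T \<subseteq> {-1..1}" "{-1..1} \<subseteq> closure T"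
    using separable by blast
  have eq: "Inf (h \<omega> ` {x. \<bar>x\<bar> \<le> r \<omega>}) = (INF t\<in>T. h \<omega> (r \<omega> * t))" if \<omega>: "\<omega> \<in> space G" for \<omega>
  proof -
    have "{x. \<bar>x\<bar> \<le> r \<omega>} = (\<lambda>t. r \<omega> * t) ` {-1..1}"
    proof (cases "r \<omega> = 0")
      case True then show ?thesis by (auto intro: image_eqI[where x=0])
    next
      case False
      then have rp: "r \<omega> > 0" using r0[OF \<omega>] by auto
      show ?thesis
      proof (intro set_eqI iffI)
        fix x assume "x \<in> {x. \<bar>x\<bar> \<le> r \<omega>}"
        then show "x \<in> (\<lambda>t. r \<omega> * t) ` {-1..1}"
          using rp by (intro image_eqI[where x="x / r \<omega>"]) (auto simp: field_simps abs_le_iff)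
      next
        fix x assume "x \<in> (\<lambda>t. r \<omega> * t) ` {-1..1}"
        then obtain t where "t \<in> {-1..1}" "x = r \<omega> * t" by auto
        then show "x \<in> {x. \<bar>x\<bar> \<le> r \<omega>}" using rp
          by (auto simp: abs_mult intro: mult_left_le[where a="\<bar>t\<bar>", simplified])
      qed
    qed
    then have "Inf (h \<omega> ` {x. \<bar>x\<bar> \<le> r \<omega>}) = (INF t\<in>{-1..1}. h \<omega> (r \<omega> * t))"
      by (simp add: image_image)
    also have "\<dots> = (INF t\<in>T. h \<omega> (r \<omega> * t))"
    proof (rule inf_dense[OF _ _ _ T(2,3)])
      show "continuous_on {-1..1} (\<lambda>t. h \<omega> (r \<omega> * t))"
        by (rule continuous_at_imp_continuous_on) (auto intro!: continuous_at_compose[of _ "\<lambda>t. r \<omega> * t" "h \<omega>", unfolded o_def] continuous_intros hc[OF \<omega>])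
    qed auto
    finally show ?thesis .
  qed
  have "(\<lambda>\<omega>. INF t\<in>T. h \<omega> (r \<omega> * t)) \<in> borel_measurable G"
    by (rule borel_measurable_cINF_real[OF T(1)]) (rule carath_meas[OF hm hc], use r in measurable)
  then show ?thesis by (subst measurable_cong[OF eq]) auto
qed





lemma vec_nth_meas[measurable (raw)]:
  fixes g :: "'a \<Rightarrow> 'b::euclidean_space^'n"
  shows "g \<in> borel_measurable M \<Longrightarrow> (\<lambda>\<omega>. g \<omega> $ i) \<in> borel_measurable M"
  using measurable_compose[OF _ borel_measurable_continuous_onI[OF linear_continuous_on[OF bounded_linear_vec_nth[of i]]]]
  by blast

lemma minv_prop:
  fixes A :: "real^'n^'n"
  assumes "invertible A"
  shows "A ** matrix_inv A = mat 1 \<and> matrix_inv A ** A = mat 1"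
  using assms unfolding invertible_def matrix_inv_def by (rule someI_ex)

lemma vec_measI:
  fixes g :: "'a \<Rightarrow> 'b::euclidean_space^'n"
  assumes "\<And>i. (\<lambda>\<omega>. g \<omega> $ i) \<in> borel_measurable M"
  shows "g \<in> borel_measurable M"
proof (subst borel_measurable_euclidean_space, intro ballI)
  fix b :: "'b^'n" assume "b \<in> Basis"
  then obtain i u where b: "b = axis i u" "u \<in> Basis" by (auto simp: Basis_vec_def)
  have "(\<lambda>\<omega>. g \<omega> $ i \<bullet> u) \<in> borel_measurable M" using assms[of i] by measurable
  then show "(\<lambda>x. g x \<bullet> b) \<in> borel_measurable M" by (simp add: b inner_axis)
qed

lemma mat_measI:
  fixes g :: "'a \<Rightarrow> real^'n^'m"
  assumes "\<And>i j. (\<lambda>\<omega>. g \<omega> $ i $ j) \<in> borel_measurable M"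
  shows "g \<in> borel_measurable M"
  by (intro vec_measI assms)

lemma det_meas[measurable (raw)]:
  fixes A :: "'a \<Rightarrow> real^'n^'n"
  assumes [measurable]: "A \<in> borel_measurable M"
  shows "(\<lambda>\<omega>. det (A \<omega>)) \<in> borel_measurable M"
  unfolding det_def by measurable

lemma mmult_meas[measurable (raw)]:
  fixes A :: "'a \<Rightarrow> real^'n^'m" and B :: "'a \<Rightarrow> real^'k^'n"
  assumes [measurable]: "A \<in> borel_measurable M" "B \<in> borel_measurable M"
  shows "(\<lambda>\<omega>. A \<omega> ** B \<omega>) \<in> borel_measurable M"
  by (rule mat_measI) (simp add: matrix_matrix_mult_def)

lemma mvmult_meas[measurable (raw)]:
  fixes A :: "'a \<Rightarrow> real^'n^'m" and x :: "'a \<Rightarrow> real^'n"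
  assumes [measurable]: "A \<in> borel_measurable M" "x \<in> borel_measurable M"
  shows "(\<lambda>\<omega>. A \<omega> *v x \<omega>) \<in> borel_measurable M"
  by (rule vec_measI) (simp add: matrix_vector_mult_def)

lemma outer_meas[measurable (raw)]:
  fixes x y :: "'a \<Rightarrow> real^'n"
  assumes [measurable]: "x \<in> borel_measurable M" "y \<in> borel_measurable M"
  shows "(\<lambda>\<omega>. outer (x \<omega>) (y \<omega>)) \<in> borel_measurable M"
  by (rule mat_measI) (simp add: outer_def)

lemma inv_cramer:
  fixes A :: "real^'n^'n"
  assumes "det A \<noteq> 0"
  shows "matrix_inv A $ i $ j = det (\<chi> a b. if b = i then axis j 1 $ a else A $ a $ b) / det A"
proof -
  have inv: "invertible A" using assms invertible_det_nz by blast
  have "A *v (matrix_inv A *v axis j 1) = axis j 1"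
    by (simp add: matrix_vector_mul_assoc minv_prop[OF inv])
  then have "matrix_inv A *v axis j 1 = (\<chi> k. det (\<chi> a b. if b = k then axis j 1 $ a else A $ a $ b) / det A)"
    using cramer[OF assms] by blast
  moreover have "(matrix_inv A *v axis j 1) $ i = matrix_inv A $ i $ j"
    by (simp add: matrix_vector_mult_def axis_def if_distrib cong: if_cong)
  ultimately show ?thesis by simp
qed

lemma minv_meas:
  fixes A :: "'a \<Rightarrow> real^'n^'n"
  assumes [measurable]: "A \<in> borel_measurable M" and nz: "\<And>\<omega>. \<omega> \<in> space M \<Longrightarrow> det (A \<omega>) \<noteq> 0"
  shows "(\<lambda>\<omega>. matrix_inv (A \<omega>)) \<in> borel_measurable M"
proof (rule mat_measI)
  fix i j
  have "(\<lambda>\<omega>. det (\<chi> a b. if b = i then axis j 1 $ a else A \<omega> $ a $ b) / det (A \<omega>)) \<in> borel_measurable M"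
  proof -
    have "(\<lambda>\<omega>. (\<chi> a b. if b = i then axis j 1 $ a else A \<omega> $ a $ b)) \<in> borel_measurable M"
      by (rule mat_measI) simp
    then show ?thesis by measurable
  qed
  then show "(\<lambda>\<omega>. matrix_inv (A \<omega>) $ i $ j) \<in> borel_measurable M"
    by (subst measurable_cong[OF inv_cramer[OF nz]]) auto
qed



lemma scaleR_mv: "((c::real) *\<^sub>R A) *v x = c *\<^sub>R (A *v (x::real^'n))"
  by (simp add: vec_eq_iff matrix_vector_mult_def sum_distrib_left mult.assoc)

lemma outer_mv: "outer p q *v w = (q \<bullet> w) *\<^sub>R (p::real^'n)"
proof -
  have "(\<Sum>j\<in>UNIV. p $ i * q $ j * w $ j) = (\<Sum>j\<in>UNIV. q $ j * w $ j) * p $ i" for i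
    by (subst sum_distrib_right) (rule sum.cong, auto)
  then show ?thesis by (simp add: vec_eq_iff matrix_vector_mult_def outer_def inner_vec_def)
qed

lemma sym_inner: "transpose P = P \<Longrightarrow> x \<bullet> (P *v y) = y \<bullet> (P *v (x::real^'n))"
  by (metis dot_lmul_matrix inner_commute transpose_matrix_vector)

lemma pd_inj:
  fixes P :: "real^'n^'n"
  assumes "posdef P" shows "invertible P" "det P \<noteq> 0"
proof -
  have "inj ((*v) P)"
  proof (rule injI)
    fix x y assume "P *v x = P *v y"
    then have "P *v (x - y) = 0" by (simp add: matrix_vector_mult_diff_distrib)
    then show "x = y" using assms unfolding posdef_def by (metis inner_zero_right less_irrefl right_minus_eq)
  qed
  then show inv: "invertible P" using matrix_left_invertible_injective invertible_left_inverse by blast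
  then show "det P \<noteq> 0" using invertible_det_nz by blast
qed

lemma pd_inv_pos:
  fixes P :: "real^'n^'n"
  assumes "posdef P" "x \<noteq> 0"
  shows "x \<bullet> (matrix_inv P *v x) > 0"
proof -
  define y where "y = matrix_inv P *v x"
  have PQ: "P ** matrix_inv P = mat 1"
    using pd_inj(1)[OF assms(1)] unfolding invertible_def matrix_inv_def by (rule someI2_ex) auto
  have x: "x = P *v y" unfolding y_def by (simp add: matrix_vector_mul_assoc PQ)
  have "y \<noteq> 0" using x assms(2) by auto
  then have "y \<bullet> (P *v y) > 0" using assms(1) by (simp add: posdef_def)
  then show ?thesis unfolding y_def[symmetric] using x by (simp add: inner_commute)
qed

lemma pd_cs:
  fixes P :: "real^'n^'n"
  assumes "posdef P"
  shows "(p \<bullet> (P *v v))^2 \<le> (v \<bullet> (P *v v)) * (p \<bullet> (P *v p))"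
proof -
  have sym: "transpose P = P" using assms by (simp add: posdef_def)
  have nn: "w \<bullet> (P *v w) \<ge> 0" for w using assms by (cases "w = 0") (auto simp: posdef_def less_imp_le)
  define A where "A = v \<bullet> (P *v v)"
  define B where "B = p \<bullet> (P *v v)"
  define C where "C = p \<bullet> (P *v p)"
  have q: "(v - t *\<^sub>R p) \<bullet> (P *v (v - t *\<^sub>R p)) = A - 2 * t * B + t^2 * C" for t
  proof -
    have "v \<bullet> (P *v p) = B" unfolding B_def using sym_inner[OF sym] by simp
    then show ?thesis
      by (simp add: A_def B_def C_def matrix_vector_mult_diff_distrib matrix_vector_mult_scaleR
          inner_diff_left inner_diff_right power2_eq_square algebra_simps)
  qed
  show ?thesis
  proof (cases "C = 0")
    case True
    have "B = 0"
    proof (rule ccontr)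
      assume "B \<noteq> 0"
      have "0 \<le> A - 2 * ((A + 1) / (2 * B)) * B + ((A + 1) / (2 * B))^2 * C" using nn q by metis
      then show False using True \<open>B \<noteq> 0\<close> by (simp add: field_simps)
    qed
    then show ?thesis unfolding A_def[symmetric] B_def[symmetric] C_def[symmetric] using True by simp
  next
    case False
    then have Cp: "C > 0" using nn[of p] C_def by auto
    have "0 \<le> A - 2 * (B / C) * B + (B / C)^2 * C" using nn q by metis
    then have "0 \<le> A * C - B^2" using Cp by (simp add: field_simps power2_eq_square)
    then show ?thesis by (simp add: A_def[symmetric] B_def[symmetric] C_def[symmetric])
  qed
qed

lemma pd_update:
  fixes P :: "real^'n^'n"
  assumes P: "posdef P" and mu: "\<mu> > 0" and c: "c \<ge> 0"
  shows "posdef (P - (1 / (\<mu> + c * (p \<bullet> (P *v p))) * c) *\<^sub>R (P ** outer p p ** P))"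
proof -
  have sym: "transpose P = P" using P by (simp add: posdef_def)
  have nn: "w \<bullet> (P *v w) \<ge> 0" for w using P by (cases "w = 0") (auto simp: posdef_def less_imp_le)
  define C where "C = p \<bullet> (P *v p)"
  define a where "a = 1 / (\<mu> + c * C)"
  have den: "\<mu> + c * C > 0" using mu c nn[of p] C_def by (simp add: add_pos_nonneg)
  have ap: "a > 0" using den a_def by simp
  have trO: "transpose (outer p p) = outer p p" by (simp add: vec_eq_iff transpose_def outer_def mult.commute)
  have trM: "transpose (P ** outer p p ** P) = P ** outer p p ** P"
    by (simp add: matrix_transpose_mul sym trO matrix_mul_assoc)
  have tr: "transpose (P - (a * c) *\<^sub>R (P ** outer p p ** P)) = P - (a * c) *\<^sub>R (P ** outer p p ** P)"
  proof -
    have "transpose (X - Y) = transpose X - transpose (Y::real^'n^'n)" for X Y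
      by (simp add: vec_eq_iff transpose_def)
    then show ?thesis by (simp add: transpose_scalar trM sym)
  qed
  have "x \<bullet> ((P - (a * c) *\<^sub>R (P ** outer p p ** P)) *v x) > 0" if x: "x \<noteq> 0" for x
  proof -
    define A where "A = x \<bullet> (P *v x)"
    define B where "B = p \<bullet> (P *v x)"
    have Ap: "A > 0" using P x by (simp add: posdef_def A_def)
    have e1: "(P ** outer p p ** P) *v x = B *\<^sub>R (P *v p)"
      by (simp add: matrix_vector_mul_assoc[symmetric] outer_mv B_def matrix_vector_mult_scaleR)
    have e2: "x \<bullet> (P *v p) = B" unfolding B_def using sym_inner[OF sym] by simp
    have val: "x \<bullet> ((P - (a * c) *\<^sub>R (P ** outer p p ** P)) *v x) = A - a * c * B^2"
      by (simp add: matrix_vector_mult_diff_rdistrib scaleR_mv e1 inner_diff_right e2 A_def power2_eq_square)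
    have cs: "B^2 \<le> A * C" using pd_cs[OF P, of p x] by (simp add: A_def B_def C_def)
    have "a * c * B^2 \<le> a * c * (A * C)" using cs ap c by (simp add: mult_left_mono)
    moreover have "A - a * c * (A * C) = A * (a * \<mu>)"
      using den by (simp add: a_def field_simps)
    moreover have "A * (a * \<mu>) > 0" using Ap ap mu by simp
    ultimately show ?thesis using val by linarith
  qed
  then show ?thesis using tr unfolding posdef_def a_def C_def by auto
qed



lemma mv_cont: "continuous_on S (\<lambda>y. (Q::real^'n^'m) *v y)"
  by (rule linear_continuous_on) (simp add: linear_conv_bounded_linear[symmetric])

lemma qn_cont: "continuous_on S (\<lambda>y. qnorm Q (z - y))"
  unfolding qnorm_def
  by (intro continuous_intros continuous_on_compose2[OF mv_cont[of UNIV Q]]) auto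

lemma proj_prop:
  assumes "compact D" "D \<noteq> {}"
  shows "proj Q D z \<in> D \<and> (\<forall>w\<in>D. qnorm Q (z - proj Q D z) \<le> qnorm Q (z - w))"
proof -
  obtain y where "y \<in> D" "\<forall>w\<in>D. qnorm Q (z - y) \<le> qnorm Q (z - w)"
    using continuous_attains_inf[OF assms qn_cont] by blast
  then have "\<exists>y. y \<in> D \<and> (\<forall>w\<in>D. qnorm Q (z - y) \<le> qnorm Q (z - w))" by blast
  then show ?thesis unfolding proj_def by (rule someI_ex)
qed

lemma quad_par:
  fixes Q :: "real^'n^'n"
  shows "(a + b) \<bullet> (Q *v (a + b)) + (a - b) \<bullet> (Q *v (a - b)) = 2 * (a \<bullet> (Q *v a)) + 2 * (b \<bullet> (Q *v b))"
  by (simp add: matrix_vector_right_distrib matrix_vector_mult_diff_distrib inner_add_left inner_add_right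
      inner_diff_left inner_diff_right)

lemma quad_scale:
  fixes Q :: "real^'n^'n"
  shows "(c *\<^sub>R a) \<bullet> (Q *v (c *\<^sub>R a)) = c^2 * (a \<bullet> (Q *v a))"
  by (simp add: matrix_vector_mult_scaleR power2_eq_square)

lemma proj_unique:
  fixes Q :: "real^'n^'n"
  assumes pd: "\<And>x. x \<noteq> 0 \<Longrightarrow> x \<bullet> (Q *v x) > 0" and cv: "convex D"
    and y1: "y1 \<in> D" "\<forall>w\<in>D. qnorm Q (z - y1) \<le> qnorm Q (z - w)"
    and y2: "y2 \<in> D" "\<forall>w\<in>D. qnorm Q (z - y2) \<le> qnorm Q (z - w)"
  shows "y1 = y2"
proof (rule ccontr)
  assume ne: "y1 \<noteq> y2"
  define q where "q w = w \<bullet> (Q *v w)" for w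
  have qnn: "q w \<ge> 0" for w using pd[of w] by (cases "w = 0") (auto simp: q_def)
  have qn: "qnorm Q w = sqrt (q w)" for w by (simp add: qnorm_def q_def)
  define w1 where "w1 = z - y1"
  define w2 where "w2 = z - y2"
  define ym where "ym = (1/2) *\<^sub>R y1 + (1/2) *\<^sub>R y2"
  have ymD: "ym \<in> D" unfolding ym_def using convexD[OF cv y1(1) y2(1), of "1/2" "1/2"] by simp
  have eq12: "q w1 = q w2"
    using y1(2)[rule_format, OF y2(1)] y2(2)[rule_format, OF y1(1)] qnn by (simp add: qn w1_def w2_def)
  have half: "(1/2::real) *\<^sub>R z + (1/2::real) *\<^sub>R z = z" by (simp add: scaleR_left_distrib[symmetric])
  have zm: "z - ym = (1/2) *\<^sub>R (w1 + w2)"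
  proof -
    have "(1/2::real) *\<^sub>R (w1 + w2) = ((1/2::real) *\<^sub>R z - (1/2::real) *\<^sub>R y1) + ((1/2::real) *\<^sub>R z - (1/2::real) *\<^sub>R y2)"
      by (simp add: w1_def w2_def scaleR_right_distrib scaleR_right_diff_distrib)
    also have "\<dots> = ((1/2::real) *\<^sub>R z + (1/2::real) *\<^sub>R z) - ym" unfolding ym_def by (simp add: algebra_simps)
    finally show ?thesis using half by simp
  qed
  have "q (w1 - w2) > 0" using ne pd[of "w1 - w2"] by (auto simp: q_def w1_def w2_def)
  moreover have "q (w1 + w2) + q (w1 - w2) = 2 * q w1 + 2 * q w2" unfolding q_def by (rule quad_par)
  ultimately have "q (z - ym) < q w1"
    unfolding zm q_def quad_scale using eq12 unfolding q_def by (simp add: power2_eq_square)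
  then have "qnorm Q (z - ym) < qnorm Q (z - y1)" by (simp add: qn w1_def)
  then show False using y1(2) ymD by force
qed





lemma inf_eq_min:
  fixes g :: "'b \<Rightarrow> real"
  assumes "y \<in> S" "\<forall>w\<in>S. g y \<le> g w"
  shows "(INF w\<in>S. g w) = g y"
proof (rule antisym)
  have "bdd_below (g ` S)" using assms by (auto simp: bdd_below_def)
  then show "(INF w\<in>S. g w) \<le> g y" using assms(1) by (rule cINF_lower2) simp
  show "g y \<le> (INF w\<in>S. g w)" using assms by (intro cINF_greatest) auto
qed

lemma inf_meas_compact:
  fixes h :: "'a \<Rightarrow> 'b::{metric_space, second_countable_topology} \<Rightarrow> real"
  assumes hm: "\<And>y. (\<lambda>\<omega>. h \<omega> y) \<in> borel_measurable M"
    and hc: "\<And>\<omega>. \<omega> \<in> space M \<Longrightarrow> continuous_on K (h \<omega>)"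
    and K: "compact K" "K \<noteq> {}"
  shows "(\<lambda>\<omega>. INF y\<in>K. h \<omega> y) \<in> borel_measurable M"
proof -
  obtain T where T: "countable T" "T \<subseteq> K" "K \<subseteq> closure T" using separable by blast
  have "(\<lambda>\<omega>. INF y\<in>T. h \<omega> y) \<in> borel_measurable M"
    by (rule borel_measurable_cINF_real[OF T(1) hm])
  moreover have "\<omega> \<in> space M \<Longrightarrow> (INF y\<in>K. h \<omega> y) = (INF y\<in>T. h \<omega> y)" for \<omega>
    by (rule inf_dense[OF hc K T(2,3)])
  ultimately show ?thesis by (subst measurable_cong) auto
qed

lemma proj_meas:
  fixes Q :: "'a \<Rightarrow> real^'n^'n" and z :: "'a \<Rightarrow> real^'n"
  assumes Qm[measurable]: "Q \<in> borel_measurable M" and zm[measurable]: "z \<in> borel_measurable M"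
    and D: "compact D" "convex D" "D \<noteq> {}"
    and pd: "\<And>\<omega> x. \<omega> \<in> space M \<Longrightarrow> x \<noteq> 0 \<Longrightarrow> x \<bullet> (Q \<omega> *v x) > 0"
  shows "(\<lambda>\<omega>. proj (Q \<omega>) D (z \<omega>)) \<in> borel_measurable M"
proof (rule vec_measI)
  fix j
  define h where "h \<omega> y = qnorm (Q \<omega>) (z \<omega> - y)" for \<omega> y
  have hm: "(\<lambda>\<omega>. h \<omega> y) \<in> borel_measurable M" for y unfolding h_def qnorm_def by measurable
  have hc: "continuous_on S (h \<omega>)" for S \<omega> unfolding h_def by (rule qn_cont)
  define ys where "ys \<omega> = proj (Q \<omega>) D (z \<omega>)" for \<omega>
  have ysp: "ys \<omega> \<in> D \<and> (\<forall>w\<in>D. h \<omega> (ys \<omega>) \<le> h \<omega> w)" for \<omega>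
    unfolding ys_def h_def by (rule proj_prop[OF D(1,3)])
  show "(\<lambda>\<omega>. proj (Q \<omega>) D (z \<omega>) $ j) \<in> borel_measurable M"
    unfolding ys_def[symmetric]
  proof (subst borel_measurable_iff_le, intro allI)
    fix c
    define Dc where "Dc = D \<inter> {y. y $ j \<le> c}"
    have cDc: "compact Dc" unfolding Dc_def
      by (rule compact_Int_closed[OF D(1)]) (intro closed_Collect_le continuous_intros)
    show "{w \<in> space M. ys w $ j \<le> c} \<in> sets M"
    proof (cases "Dc = {}")
      case True
      then have "{w \<in> space M. ys w $ j \<le> c} = {}" using ysp by (auto simp: Dc_def)
      then show ?thesis by (metis sets.empty_sets)
    next
      case False
      have m1: "(\<lambda>\<omega>. INF y\<in>D. h \<omega> y) \<in> borel_measurable M" by (rule inf_meas_compact[OF hm hc D(1,3)])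
      have m2: "(\<lambda>\<omega>. INF y\<in>Dc. h \<omega> y) \<in> borel_measurable M" by (rule inf_meas_compact[OF hm hc cDc False])
      have eq: "{w \<in> space M. ys w $ j \<le> c} = {w \<in> space M. (INF y\<in>Dc. h w y) \<le> (INF y\<in>D. h w y)}"
      proof (intro set_eqI iffI)
        fix \<omega> assume "\<omega> \<in> {w \<in> space M. ys w $ j \<le> c}"
        then have \<omega>: "\<omega> \<in> space M" "ys \<omega> $ j \<le> c" by auto
        have mD: "(INF y\<in>D. h \<omega> y) = h \<omega> (ys \<omega>)" using ysp by (intro inf_eq_min) auto
        have yDc: "ys \<omega> \<in> Dc" using ysp \<omega> by (auto simp: Dc_def)
        have bdd: "bdd_below (h \<omega> ` Dc)" using ysp by (auto simp: bdd_below_def Dc_def)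
        have "(INF y\<in>Dc. h \<omega> y) \<le> h \<omega> (ys \<omega>)" by (rule cINF_lower[OF bdd yDc])
        then show "\<omega> \<in> {w \<in> space M. (INF y\<in>Dc. h w y) \<le> (INF y\<in>D. h w y)}" using \<omega> mD by simp
      next
        fix \<omega> assume "\<omega> \<in> {w \<in> space M. (INF y\<in>Dc. h w y) \<le> (INF y\<in>D. h w y)}"
        then have \<omega>: "\<omega> \<in> space M" "(INF y\<in>Dc. h \<omega> y) \<le> (INF y\<in>D. h \<omega> y)" by auto
        obtain y' where y': "y' \<in> Dc" "\<forall>w\<in>Dc. h \<omega> y' \<le> h \<omega> w"
          using continuous_attains_inf[OF cDc False hc] by blast
        have mD: "(INF y\<in>D. h \<omega> y) = h \<omega> (ys \<omega>)" using ysp by (intro inf_eq_min) auto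
        have mDc: "(INF y\<in>Dc. h \<omega> y) = h \<omega> y'" using y' by (intro inf_eq_min) auto
        have y'D: "y' \<in> D" using y' by (auto simp: Dc_def)
        have le: "h \<omega> y' \<le> h \<omega> (ys \<omega>)" using \<omega>(2) mD mDc by simp
        have "\<forall>w\<in>D. h \<omega> y' \<le> h \<omega> w"
        proof
          fix w assume "w \<in> D"
          then have "h \<omega> (ys \<omega>) \<le> h \<omega> w" using ysp[of \<omega>] by blast
          then show "h \<omega> y' \<le> h \<omega> w" using le by linarith
        qed
        then have a1: "\<forall>w\<in>D. qnorm (Q \<omega>) (z \<omega> - y') \<le> qnorm (Q \<omega>) (z \<omega> - w)" by (simp add: h_def)
        have a2: "ys \<omega> \<in> D" "\<forall>w\<in>D. qnorm (Q \<omega>) (z \<omega> - ys \<omega>) \<le> qnorm (Q \<omega>) (z \<omega> - w)"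
          using ysp[of \<omega>] by (simp_all add: h_def)
        have "y' = ys \<omega>" by (rule proj_unique[OF pd[OF \<omega>(1)] D(2) y'D a1 a2])
        then show "\<omega> \<in> {w \<in> space M. ys w $ j \<le> c}" using y' \<omega> by (auto simp: Dc_def)
      qed
      show ?thesis unfolding eq using m1 m2 by measurable
    qed
  qed
qed





lemma key_bound:
  fixes F f :: "real \<Rightarrow> real"
  assumes lip: "\<And>a b. -R \<le> a \<Longrightarrow> a \<le> b \<Longrightarrow> b \<le> R \<Longrightarrow> 0 \<le> F b - F a \<and> F b - F a \<le> c2 * (b - a)"
    and fb: "\<And>y. \<bar>y\<bar> \<le> R \<Longrightarrow> \<bar>f y\<bar> \<le> c2"
    and pts: "\<bar>c0\<bar> \<le> R" "\<bar>c0 - t\<bar> \<le> R" "\<bar>c0 - d\<bar> \<le> R"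
    and al: "\<bar>\<alpha>\<bar> \<le> 2"
  shows "\<bar>\<alpha> * (F c0 - F (c0 - t)) - (if d \<noteq> 0 then \<alpha> * (F c0 - F (c0 - d)) / d else \<alpha> * f c0) * t\<bar> \<le> 4 * c2 * \<bar>t - d\<bar>"
proof -
  have L: "\<bar>F a - F b\<bar> \<le> c2 * \<bar>a - b\<bar>" if "\<bar>a\<bar> \<le> R" "\<bar>b\<bar> \<le> R" for a b
  proof (cases "a \<le> b")
    case True
    have "-R \<le> a" "b \<le> R" using that by auto
    from lip[OF this(1) True this(2)] True show ?thesis by (simp add: abs_if)
  next
    case False
    have "-R \<le> b" "a \<le> R" "b \<le> a" using that False by auto
    from lip[OF this(1) this(3) this(2)] False show ?thesis by (simp add: abs_if)
  qed
  have c2: "c2 \<ge> 0" using fb[of c0] pts by auto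
  define G where "G s = F c0 - F (c0 - s)" for s
  have Gt: "\<bar>G t - G d\<bar> \<le> c2 * \<bar>t - d\<bar>" unfolding G_def using L[OF pts(3) pts(2)] by (simp add: abs_minus_commute)
  have Gd: "\<bar>G d\<bar> \<le> c2 * \<bar>d\<bar>" unfolding G_def using L[OF pts(1) pts(3)] by simp
  have Gt0: "\<bar>G t\<bar> \<le> c2 * \<bar>t\<bar>" unfolding G_def using L[OF pts(1) pts(2)] by simp
  show ?thesis
  proof (cases "d = 0")
    case False
    define q where "q = G d / d"
    have id: "\<alpha> * G t - \<alpha> * G d / d * t = \<alpha> * (G t - G d) + \<alpha> * q * (d - t)"
      unfolding q_def using False by (simp add: field_simps)
    have b1: "\<bar>\<alpha> * (G t - G d)\<bar> \<le> 2 * (c2 * \<bar>t - d\<bar>)"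
      by (simp add: abs_mult) (rule mult_mono[OF al Gt]; simp)
    have qb: "\<bar>q\<bar> \<le> c2" unfolding q_def using Gd False by (simp add: abs_divide divide_le_eq)
    then have "\<bar>\<alpha>\<bar> * \<bar>q\<bar> \<le> 2 * c2" by (rule mult_mono[OF al]) (simp_all add: c2)
    then have "\<bar>\<alpha>\<bar> * \<bar>q\<bar> * \<bar>t - d\<bar> \<le> 2 * c2 * \<bar>t - d\<bar>" by (rule mult_right_mono) simp
    moreover have "\<bar>\<alpha> * q * (d - t)\<bar> = \<bar>\<alpha>\<bar> * \<bar>q\<bar> * \<bar>t - d\<bar>"
      by (simp only: abs_mult abs_minus_commute[of d t])
    ultimately have b2: "\<bar>\<alpha> * q * (d - t)\<bar> \<le> 2 * c2 * \<bar>t - d\<bar>" by simp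
    have "\<bar>\<alpha> * G t - \<alpha> * G d / d * t\<bar> \<le> \<bar>\<alpha> * (G t - G d)\<bar> + \<bar>\<alpha> * q * (d - t)\<bar>"
      unfolding id by (rule abs_triangle_ineq)
    then have "\<bar>\<alpha> * G t - \<alpha> * G d / d * t\<bar> \<le> 4 * c2 * \<bar>t - d\<bar>" using b1 b2 by linarith
    then show ?thesis using False by (simp add: G_def)
  next
    case True
    have f0: "\<bar>f c0\<bar> \<le> c2" using fb pts(1) by simp
    have "\<bar>\<alpha> * G t\<bar> \<le> 2 * (c2 * \<bar>t\<bar>)" by (simp add: abs_mult) (rule mult_mono[OF al Gt0]; simp)
    moreover have "\<bar>\<alpha> * f c0 * t\<bar> \<le> 2 * c2 * \<bar>t\<bar>"
      by (simp add: abs_mult) (intro mult_mono mult_mono[OF al f0]; simp add: c2)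
    ultimately show ?thesis using True by (simp add: G_def)
  qed
qed


lemma final_bound:
  fixes F f :: "real \<Rightarrow> real" and L l u U p x xb C Mc c2 :: real
  assumes lip: "\<And>a b. -max (2*C) (C + Mc) \<le> a \<Longrightarrow> a \<le> b \<Longrightarrow> b \<le> max (2*C) (C + Mc) \<Longrightarrow> 0 \<le> F b - F a \<and> F b - F a \<le> c2 * (b - a)"
    and fb: "\<And>y. \<bar>y\<bar> \<le> max (2*C) (C + Mc) \<Longrightarrow> \<bar>f y\<bar> \<le> c2"
    and F0: "F 0 = 1/2"
    and ord: "L \<le> l" "l \<le> u" "u \<le> U" "\<not>(L = l \<and> l = u \<and> u = U)"
    and bd: "\<bar>p\<bar> \<le> C" "\<bar>x\<bar> \<le> C" "\<bar>xb\<bar> \<le> C" "l \<le> Mc" "-u \<le> Mc"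
  shows "\<bar>(if Sat L l u U x = L then 1 - F (l - p) else if Sat L l u U x = U then - F (u - p) else 1 - 2 * F (x - p))
          + corr F L l u U x - beta2 F f L l u U x xb * (p - x)\<bar> \<le> 4 * c2 * \<bar>p - xb\<bar>"
proof -
  define R where "R = max (2*C) (C + Mc)"
  have lip': "\<And>a b. -R \<le> a \<Longrightarrow> a \<le> b \<Longrightarrow> b \<le> R \<Longrightarrow> 0 \<le> F b - F a \<and> F b - F a \<le> c2 * (b - a)"
    unfolding R_def by (rule lip)
  have fb': "\<And>y. \<bar>y\<bar> \<le> R \<Longrightarrow> \<bar>f y\<bar> \<le> c2" unfolding R_def by (rule fb)
  have R: "2 * C \<le> R" "C + Mc \<le> R" unfolding R_def by auto
  have kb: "\<bar>\<alpha> * (F c0 - F (c0 - (p - x))) - (if xb - x \<noteq> 0 then \<alpha> * (F c0 - F (c0 - (xb - x))) / (xb - x) else \<alpha> * f c0) * (p - x)\<bar>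
      \<le> 4 * c2 * \<bar>p - xb\<bar>"
    if "\<bar>c0\<bar> \<le> R" "\<bar>c0 - (p - x)\<bar> \<le> R" "\<bar>c0 - (xb - x)\<bar> \<le> R" "\<bar>\<alpha>\<bar> \<le> 2" for c0 \<alpha>
    using key_bound[of R F c2 f c0 "p - x" "xb - x" \<alpha>, OF lip' fb' that] by simp
  consider (cL) "Sat L l u U x = L" | (cU) "Sat L l u U x \<noteq> L" "Sat L l u U x = U"
    | (cM) "Sat L l u U x \<noteq> L" "Sat L l u U x \<noteq> U" by blast
  then show ?thesis
  proof cases
    case cL
    have nU: "Sat L l u U x \<noteq> U" using cL ord by (auto simp: Sat_def split: if_splits)
    have xl: "x \<le> l" using cL ord by (auto simp: Sat_def split: if_splits)
    have k: "\<bar>1 * (F (l - x) - F (l - x - (p - x))) - (if xb - x \<noteq> 0 then 1 * (F (l - x) - F (l - x - (xb - x))) / (xb - x) else 1 * f (l - x)) * (p - x)\<bar>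
      \<le> 4 * c2 * \<bar>p - xb\<bar>"
      by (rule kb) (use R xl bd in auto)
    have e: "l - x - (p - x) = l - p" "l - x - (xb - x) = l - xb" by simp_all
    show ?thesis using k cL nU unfolding e by (cases "xb = x") (simp_all add: corr_def ind_def beta2_def Let_def)
  next
    case cU
    have xu: "u \<le> x" using cU ord by (auto simp: Sat_def split: if_splits)
    have k: "\<bar>1 * (F (u - x) - F (u - x - (p - x))) - (if xb - x \<noteq> 0 then 1 * (F (u - x) - F (u - x - (xb - x))) / (xb - x) else 1 * f (u - x)) * (p - x)\<bar>
      \<le> 4 * c2 * \<bar>p - xb\<bar>"
      by (rule kb) (use R xu bd in auto)
    have e: "u - x - (p - x) = u - p" "u - x - (xb - x) = u - xb" by simp_all
    show ?thesis using k cU unfolding e by (cases "xb = x") (simp_all add: corr_def ind_def beta2_def Let_def)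
  next
    case cM
    have LU: "L < Sat L l u U x" "Sat L l u U x < U" using cM ord by (auto simp: Sat_def split: if_splits)
    have k: "\<bar>2 * (F 0 - F (0 - (p - x))) - (if xb - x \<noteq> 0 then 2 * (F 0 - F (0 - (xb - x))) / (xb - x) else 2 * f 0) * (p - x)\<bar>
      \<le> 4 * c2 * \<bar>p - xb\<bar>"
      by (rule kb) (use R bd in auto)
    have e: "0 - (p - x) = x - p" "0 - (xb - x) = x - xb" by simp_all
    show ?thesis using k cM LU unfolding e F0 by (cases "xb = x") (simp_all add: corr_def ind_def beta2_def Let_def algebra_simps)
  qed
qed


lemma dq_nonneg:
  assumes "mono (F::real\<Rightarrow>real)" "d \<noteq> 0"
  shows "0 \<le> (F c - F (c - d)) / d"
proof (cases "d > 0")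
  case True
  then have "F (c - d) \<le> F c" using assms(1) by (auto simp: mono_def)
  then show ?thesis using True by simp
next
  case False
  then have "d < 0" using assms(2) by simp
  then have "F c \<le> F (c - d)" using assms(1) by (auto simp: mono_def)
  then show ?thesis using \<open>d < 0\<close> by (simp add: divide_nonpos_neg)
qed

lemma beta2_nonneg:
  assumes "mono F" "\<And>y. 0 \<le> f y" "F 0 = 1/2"
  shows "0 \<le> beta2 F f L l u U x xb"
proof -
  have a: "0 \<le> (F (l - x) - F (l - xb)) / (xb - x)" if "xb - x \<noteq> 0"
    using dq_nonneg[OF assms(1) that, of "l - x"] by simp
  have b: "0 \<le> (F (u - x) - F (u - xb)) / (xb - x)" if "xb - x \<noteq> 0"
    using dq_nonneg[OF assms(1) that, of "u - x"] by simp
  have c: "0 \<le> (1 - 2 * F (x - xb)) / (xb - x)" if "xb - x \<noteq> 0"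
  proof -
    have "0 \<le> (F 0 - F (0 - (xb - x))) / (xb - x)" by (rule dq_nonneg[OF assms(1) that])
    then have h: "0 \<le> 2 * ((F 0 - F (0 - (xb - x))) / (xb - x))" by (intro mult_nonneg_nonneg) simp_all
    have e: "1 - 2 * F (x - xb) = 2 * (F 0 - F (0 - (xb - x)))" using assms(3) by simp
    show ?thesis using h unfolding e by (simp add: times_divide_eq_right)
  qed
  show ?thesis unfolding beta2_def Let_def using a b c assms(2) by auto
qed





lemma Sat_meas[measurable (raw)]:
  fixes L l u U x :: "'a \<Rightarrow> real"
  assumes [measurable]: "L \<in> borel_measurable M" "l \<in> borel_measurable M" "u \<in> borel_measurable M"
    "U \<in> borel_measurable M" "x \<in> borel_measurable M"
  shows "(\<lambda>\<omega>. Sat (L \<omega>) (l \<omega>) (u \<omega>) (U \<omega>) (x \<omega>)) \<in> borel_measurable M"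
  unfolding Sat_def by measurable

lemma ind_eq_meas:
  fixes f g :: "'a \<Rightarrow> real"
  assumes "f \<in> borel_measurable M" "g \<in> borel_measurable M"
  shows "(\<lambda>\<omega>. ind (f \<omega> = g \<omega>)) \<in> borel_measurable M"
proof -
  have "(indicator {\<omega>\<in>space M. f \<omega> = g \<omega>} :: 'a \<Rightarrow> real) \<in> borel_measurable M"
    using borel_measurable_eq[OF assms] by simp
  then show ?thesis
    by (rule measurable_cong[THEN iffD1, rotated]) (simp add: ind_def indicator_def)
qed

lemma corr_meas:
  fixes L l u U x :: "'a \<Rightarrow> real" and Fc :: "'a \<Rightarrow> real \<Rightarrow> real"
  assumes m[measurable]: "L \<in> borel_measurable M" "l \<in> borel_measurable M" "u \<in> borel_measurable M"
    "U \<in> borel_measurable M" "x \<in> borel_measurable M"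
    and Fu[measurable]: "(\<lambda>\<omega>. Fc \<omega> (u \<omega> - x \<omega>)) \<in> borel_measurable M"
    and Fl[measurable]: "(\<lambda>\<omega>. Fc \<omega> (l \<omega> - x \<omega>)) \<in> borel_measurable M"
  shows "(\<lambda>\<omega>. corr (Fc \<omega>) (L \<omega>) (l \<omega>) (u \<omega>) (U \<omega>) (x \<omega>)) \<in> borel_measurable M"
proof -
  have s[measurable]: "(\<lambda>\<omega>. Sat (L \<omega>) (l \<omega>) (u \<omega>) (U \<omega>) (x \<omega>)) \<in> borel_measurable M" by (rule Sat_meas[OF m])
  have i1[measurable]: "(\<lambda>\<omega>. ind (Sat (L \<omega>) (l \<omega>) (u \<omega>) (U \<omega>) (x \<omega>) = U \<omega>)) \<in> borel_measurable M"
    by (rule ind_eq_meas[OF s m(4)])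
  have i2[measurable]: "(\<lambda>\<omega>. ind (Sat (L \<omega>) (l \<omega>) (u \<omega>) (U \<omega>) (x \<omega>) = L \<omega>)) \<in> borel_measurable M"
    by (rule ind_eq_meas[OF s m(1)])
  show ?thesis unfolding corr_def by measurable
qed




theorem lemma7:
  fixes M :: "'a measure"
    and Fs :: "nat \<Rightarrow> 'a measure"
    and \<phi> :: "nat \<Rightarrow> 'a \<Rightarrow> real^'d"
    and \<theta> :: "real^'d"
    and \<epsilon> :: "nat \<Rightarrow> 'a \<Rightarrow> real"
    and y :: "nat \<Rightarrow> 'a \<Rightarrow> real"
    and D :: "(real^'d) set"
    and Cs :: "nat \<Rightarrow> 'a \<Rightarrow> real"
    and C Mc :: real
    and L l u U b :: "nat \<Rightarrow> 'a \<Rightarrow> real"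
    and F f :: "nat \<Rightarrow> 'a \<Rightarrow> real \<Rightarrow> real"
    and \<theta>b \<theta>s :: "nat \<Rightarrow> 'a \<Rightarrow> real^'d"
    and Pb P :: "nat \<Rightarrow> 'a \<Rightarrow> real^'d^'d"
    and \<mu>b \<mu> vb v ab a \<beta>b \<beta> \<psi> :: "nat \<Rightarrow> 'a \<Rightarrow> real"
    and \<theta>b0 \<theta>0 :: "real^'d"
    and Pb0 P0 :: "real^'d^'d"
  assumes M: "prob_space M"
    and filt_sub: "\<And>k. subalgebra M (Fs k)"
    and filt_mono: "\<And>k. sets (Fs k) \<subseteq> sets (Fs (Suc k))"
    \<comment> \<open>model\<close>
    and phi_meas: "\<And>k. \<phi> k \<in> borel_measurable (Fs k)"
    and eps_meas: "\<And>k. \<epsilon> (Suc k) \<in> borel_measurable (Fs (Suc k))"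
    and y_def: "\<And>k \<omega>. \<omega> \<in> space M \<Longrightarrow>
        y (Suc k) \<omega> = Sat (L k \<omega>) (l k \<omega>) (u k \<omega>) (U k \<omega>) (\<phi> k \<omega> \<bullet> \<theta> + \<epsilon> (Suc k) \<omega>)"
    \<comment> \<open>A1\<close>
    and A1_phi_bdd: "\<forall>\<omega>\<in>space M. \<exists>B. \<forall>k. norm (\<phi> k \<omega>) \<le> B"
    and A1_D: "convex D" "compact D" "\<theta> \<in> interior D"
    and A1_C_meas: "\<And>k. Cs k \<in> borel_measurable (Fs k)"
    and A1_C_bdd: "\<exists>B. \<forall>k. \<forall>\<omega>\<in>space M. \<bar>Cs k \<omega>\<bar> \<le> B"
    and A1_C: "\<And>k \<omega> x. \<omega> \<in> space M \<Longrightarrow> x \<in> D \<Longrightarrow> \<bar>\<phi> k \<omega> \<bullet> x\<bar> \<le> Cs k \<omega>"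
    \<comment> \<open>A2\<close>
    and A2_meas: "\<And>k. l k \<in> borel_measurable (Fs k)" "\<And>k. u k \<in> borel_measurable (Fs k)"
                 "\<And>k. L k \<in> borel_measurable (Fs k)" "\<And>k. U k \<in> borel_measurable (Fs k)"
    and A2_order: "AE \<omega> in M. \<forall>k. L k \<omega> \<le> l k \<omega> \<and> l k \<omega> \<le> u k \<omega> \<and> u k \<omega> \<le> U k \<omega>"
    and A2_M: "AE \<omega> in M. \<forall>k. max (l k \<omega>) (- u k \<omega>) \<le> Mc"
    and A2_nondeg: "AE \<omega> in M. \<forall>k. \<not> (L k \<omega> = l k \<omega> \<and> l k \<omega> = u k \<omega> \<and> u k \<omega> = U k \<omega>)"
    and A2_b_meas: "\<And>k. b k \<in> borel_measurable (Fs k)"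
    and A2_b: "\<exists>b0>0. \<forall>k. \<forall>\<omega>\<in>space M. b0 \<le> b k \<omega> \<and> b k \<omega> \<le> 1"
    \<comment> \<open>A3\<close>
    and A3_cdf: "\<And>k. cond_cdf_density M (Fs k) (\<epsilon> (Suc k)) (F (Suc k)) (f (Suc k))"
    and A3_half: "\<And>k \<omega>. \<omega> \<in> space M \<Longrightarrow> F (Suc k) \<omega> 0 = 1 / 2"
    and A3_C: "\<And>k \<omega>. \<omega> \<in> space M \<Longrightarrow> Cs k \<omega> \<le> C"
    and A3_f: "AE \<omega> in M. \<exists>c1 c2. 0 < c1 \<and> (\<forall>k x. \<bar>x\<bar> \<le> max (2 * C) (C + Mc) \<longrightarrow>
                   c1 \<le> f (Suc k) \<omega> x \<and> f (Suc k) \<omega> x \<le> c2)"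
    \<comment> \<open>Step 1 of TSWLAD\<close>
    and S1_init: "\<theta>b0 \<in> D" "posdef Pb0" "\<And>\<omega>. \<theta>b 0 \<omega> = \<theta>b0" "\<And>\<omega>. Pb 0 \<omega> = Pb0"
    and S1_mu_meas: "\<And>k. \<mu>b k \<in> borel_measurable (Fs k)"
    and S1_mu: "\<exists>m1 m2. 0 < m1 \<and> (\<forall>k. \<forall>\<omega>\<in>space M. m1 \<le> \<mu>b k \<omega> \<and> \<mu>b k \<omega> \<le> m2)"
    and S1_beta: "\<And>k \<omega>. \<omega> \<in> space M \<Longrightarrow> \<beta>b k \<omega> =
        Inf (f (Suc k) \<omega> ` {x. \<bar>x\<bar> \<le> max (2 * Cs k \<omega>) (max (Cs k \<omega> + l k \<omega>) (Cs k \<omega> - u k \<omega>))})"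
    and S1_a: "\<And>k \<omega>. \<omega> \<in> space M \<Longrightarrow> ab k \<omega> =
        1 / (\<mu>b k \<omega> + \<beta>b k \<omega> * (b k \<omega>)\<^sup>2 * (\<phi> k \<omega> \<bullet> (Pb k \<omega> *v \<phi> k \<omega>)))"
    and S1_P: "\<And>k \<omega>. \<omega> \<in> space M \<Longrightarrow> Pb (Suc k) \<omega> =
        Pb k \<omega> - (ab k \<omega> * \<beta>b k \<omega> * (b k \<omega>)\<^sup>2) *\<^sub>R (Pb k \<omega> ** outer (\<phi> k \<omega>) (\<phi> k \<omega>) ** Pb k \<omega>)"
    and S1_v: "\<And>k \<omega>. \<omega> \<in> space M \<Longrightarrow> vb (Suc k) \<omega> =
        sgn (y (Suc k) \<omega> - Sat (L k \<omega>) (l k \<omega>) (u k \<omega>) (U k \<omega>) (\<phi> k \<omega> \<bullet> \<theta>b k \<omega>))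
        + corr (F (Suc k) \<omega>) (L k \<omega>) (l k \<omega>) (u k \<omega>) (U k \<omega>) (\<phi> k \<omega> \<bullet> \<theta>b k \<omega>)"
    and S1_theta: "\<And>k \<omega>. \<omega> \<in> space M \<Longrightarrow> \<theta>b (Suc k) \<omega> =
        proj (matrix_inv (Pb (Suc k) \<omega>)) D
          (\<theta>b k \<omega> + (ab k \<omega> * b k \<omega> * vb (Suc k) \<omega>) *\<^sub>R (Pb k \<omega> *v \<phi> k \<omega>))"
    \<comment> \<open>Step 2 of TSWLAD\<close>
    and S2_init: "\<theta>0 \<in> D" "posdef P0" "\<And>\<omega>. \<theta>s 0 \<omega> = \<theta>0" "\<And>\<omega>. P 0 \<omega> = P0"
    and S2_mu_meas: "\<And>k. \<mu> k \<in> borel_measurable (Fs k)"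
    and S2_mu: "\<exists>m1 m2. 0 < m1 \<and> (\<forall>k. \<forall>\<omega>\<in>space M. m1 \<le> \<mu> k \<omega> \<and> \<mu> k \<omega> \<le> m2)"
    and S2_beta: "\<And>k \<omega>. \<omega> \<in> space M \<Longrightarrow> \<beta> k \<omega> =
        beta2 (F (Suc k) \<omega>) (f (Suc k) \<omega>) (L k \<omega>) (l k \<omega>) (u k \<omega>) (U k \<omega>)
              (\<phi> k \<omega> \<bullet> \<theta>s k \<omega>) (\<phi> k \<omega> \<bullet> \<theta>b k \<omega>)"
    and S2_a: "\<And>k \<omega>. \<omega> \<in> space M \<Longrightarrow> a k \<omega> =
        1 / (\<mu> k \<omega> + \<beta> k \<omega> * (b k \<omega>)\<^sup>2 * (\<phi> k \<omega> \<bullet> (P k \<omega> *v \<phi> k \<omega>)))"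
    and S2_P: "\<And>k \<omega>. \<omega> \<in> space M \<Longrightarrow> P (Suc k) \<omega> =
        P k \<omega> - (a k \<omega> * \<beta> k \<omega> * (b k \<omega>)\<^sup>2) *\<^sub>R (P k \<omega> ** outer (\<phi> k \<omega>) (\<phi> k \<omega>) ** P k \<omega>)"
    and S2_v: "\<And>k \<omega>. \<omega> \<in> space M \<Longrightarrow> v (Suc k) \<omega> =
        sgn (y (Suc k) \<omega> - Sat (L k \<omega>) (l k \<omega>) (u k \<omega>) (U k \<omega>) (\<phi> k \<omega> \<bullet> \<theta>s k \<omega>))
        + corr (F (Suc k) \<omega>) (L k \<omega>) (l k \<omega>) (u k \<omega>) (U k \<omega>) (\<phi> k \<omega> \<bullet> \<theta>s k \<omega>)"
    and S2_theta: "\<And>k \<omega>. \<omega> \<in> space M \<Longrightarrow> \<theta>s (Suc k) \<omega> =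
        proj (matrix_inv (P (Suc k) \<omega>)) D
          (\<theta>s k \<omega> + (a k \<omega> * b k \<omega> * v (Suc k) \<omega>) *\<^sub>R (P k \<omega> *v \<phi> k \<omega>))"
    \<comment> \<open>definition of psi_k\<close>
    and psi_def: "\<And>k \<omega>. \<psi> k \<omega> =
        real_cond_exp M (Fs k)
          (\<lambda>\<omega>'. sgn (y (Suc k) \<omega>' - Sat (L k \<omega>') (l k \<omega>') (u k \<omega>') (U k \<omega>') (\<phi> k \<omega>' \<bullet> \<theta>s k \<omega>'))) \<omega>
        + corr (F (Suc k) \<omega>) (L k \<omega>) (l k \<omega>) (u k \<omega>) (U k \<omega>) (\<phi> k \<omega> \<bullet> \<theta>s k \<omega>)"
  shows "AE \<omega> in M. \<exists>K. \<forall>k.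
           \<bar>\<psi> k \<omega> - \<beta> k \<omega> * (\<phi> k \<omega> \<bullet> (\<theta> - \<theta>s k \<omega>))\<bar> \<le> K * \<bar>\<phi> k \<omega> \<bullet> (\<theta> - \<theta>b k \<omega>)\<bar>"
proof -
  interpret prob_space M by (rule M)
  have sp: "\<And>k. space (Fs k) = space M" using filt_sub by (simp add: subalgebra_def)
  have subs: "\<And>k. subalgebra (Fs (Suc k)) (Fs k)" using filt_mono sp by (simp add: subalgebra_def)
  have Fm: "\<And>k y. (\<lambda>\<omega>. F (Suc k) \<omega> y) \<in> borel_measurable (Fs k)"
    using A3_cdf unfolding cond_cdf_density_def by blast
  have hce: "\<And>k y. AE \<omega> in M. F (Suc k) \<omega> y = real_cond_exp M (Fs k) (indicator {\<omega>\<in>space M. \<epsilon> (Suc k) \<omega> \<le> y}) \<omega>"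
    using A3_cdf unfolding cond_cdf_density_def by blast
  have can: "\<And>k \<omega>. \<omega> \<in> space M \<Longrightarrow> cdfan (F (Suc k) \<omega>) (f (Suc k) \<omega>)"
    using A3_cdf unfolding cond_cdf_density_def cdfan_def by blast
  have epsM: "\<And>k. \<epsilon> (Suc k) \<in> borel_measurable M" using measurable_from_subalg[OF filt_sub eps_meas] .
  have stp: "\<And>k. cdfctx M (Fs k) (\<epsilon> (Suc k)) (F (Suc k))"
    by unfold_locales (auto simp: M filt_sub epsM hce Fm cdfan.F01[OF can] cdfan.Fcont[OF can])
  have Fc: "\<And>k \<omega> y. \<omega> \<in> space M \<Longrightarrow> isCont (F (Suc k) \<omega>) y" using cdfan.Fcont[OF can] .
  have fc: "\<And>k \<omega> y. \<omega> \<in> space M \<Longrightarrow> isCont (f (Suc k) \<omega>) y"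
    using can unfolding cdfan_def by (simp add: continuous_on_eq_continuous_at)
  have fm: "\<And>k y. (\<lambda>\<omega>. f (Suc k) \<omega> y) \<in> borel_measurable (Fs k)"
  proof -
    fix k y
    show "(\<lambda>\<omega>. f (Suc k) \<omega> y) \<in> borel_measurable (Fs k)"
    proof (rule borel_measurable_LIMSEQ_real[where u="\<lambda>n \<omega>. (F (Suc k) \<omega> (y + 1 / real (Suc n)) - F (Suc k) \<omega> y) / (1 / real (Suc n))"])
      show "(\<lambda>n. (F (Suc k) \<omega> (y + 1 / real (Suc n)) - F (Suc k) \<omega> y) / (1 / real (Suc n))) \<longlonglongrightarrow> f (Suc k) \<omega> y"
        if "\<omega> \<in> space (Fs k)" for \<omega>
        using cdfan.fderiv[OF can] that sp by auto
      show "(\<lambda>\<omega>. (F (Suc k) \<omega> (y + 1 / real (Suc n)) - F (Suc k) \<omega> y) / (1 / real (Suc n))) \<in> borel_measurable (Fs k)" for n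
        using Fm by measurable
    qed
  qed
  have Dne: "D \<noteq> {}" and thD: "\<theta> \<in> D" using A1_D(3) interior_subset by auto
  have thsD: "\<And>k \<omega>. \<omega> \<in> space M \<Longrightarrow> \<theta>s k \<omega> \<in> D"
  proof -
    fix k \<omega> assume "\<omega> \<in> space M"
    then show "\<theta>s k \<omega> \<in> D" by (cases k) (simp_all add: S2_init S2_theta proj_prop[OF A1_D(2) Dne])
  qed
  have thbD: "\<And>k \<omega>. \<omega> \<in> space M \<Longrightarrow> \<theta>b k \<omega> \<in> D"
  proof -
    fix k \<omega> assume "\<omega> \<in> space M"
    then show "\<theta>b k \<omega> \<in> D" by (cases k) (simp_all add: S1_init S1_theta proj_prop[OF A1_D(2) Dne])
  qed
  have bnd: "\<And>k \<omega>. \<omega> \<in> space M \<Longrightarrow> \<bar>\<phi> k \<omega> \<bullet> \<theta>\<bar> \<le> C \<and> \<bar>\<phi> k \<omega> \<bullet> \<theta>s k \<omega>\<bar> \<le> C \<and> \<bar>\<phi> k \<omega> \<bullet> \<theta>b k \<omega>\<bar> \<le> C \<and> 0 \<le> Cs k \<omega>"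
    using A1_C A3_C thD thsD thbD by (meson abs_ge_zero order_trans)
  have meas: "\<And>k. \<theta>s k \<in> borel_measurable (Fs k) \<and> \<theta>b k \<in> borel_measurable (Fs k) \<and>
      P k \<in> borel_measurable (Fs k) \<and> Pb k \<in> borel_measurable (Fs k) \<and> (\<forall>\<omega>\<in>space M. posdef (P k \<omega>) \<and> posdef (Pb k \<omega>))"
  proof -
    fix k
    show "\<theta>s k \<in> borel_measurable (Fs k) \<and> \<theta>b k \<in> borel_measurable (Fs k) \<and>
      P k \<in> borel_measurable (Fs k) \<and> Pb k \<in> borel_measurable (Fs k) \<and> (\<forall>\<omega>\<in>space M. posdef (P k \<omega>) \<and> posdef (Pb k \<omega>))"
    proof (induction k)
      case 0
      have e: "\<theta>s 0 = (\<lambda>\<omega>. \<theta>0)" "\<theta>b 0 = (\<lambda>\<omega>. \<theta>b0)" "P 0 = (\<lambda>\<omega>. P0)" "Pb 0 = (\<lambda>\<omega>. Pb0)"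
        by (simp_all add: fun_eq_iff S1_init S2_init)
      show ?case unfolding e using S1_init(2) S2_init(2) by simp
    next
      case (Suc k)
      note IH[measurable] = conjunct1[OF Suc] conjunct1[OF conjunct2[OF Suc]] conjunct1[OF conjunct2[OF conjunct2[OF Suc]]]
        conjunct1[OF conjunct2[OF conjunct2[OF conjunct2[OF Suc]]]]
      have pdk: "\<And>\<omega>. \<omega> \<in> space M \<Longrightarrow> posdef (P k \<omega>) \<and> posdef (Pb k \<omega>)" using Suc by blast
      note mk[measurable] = phi_meas[of k] A2_meas(1-4)[of k] A1_C_meas[of k] A2_b_meas[of k] S1_mu_meas[of k] S2_mu_meas[of k]
      have Fc': "\<And>\<omega> y. \<omega> \<in> space (Fs k) \<Longrightarrow> isCont (F (Suc k) \<omega>) y" using Fc sp by auto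
      have fc': "\<And>\<omega> y. \<omega> \<in> space (Fs k) \<Longrightarrow> isCont (f (Suc k) \<omega>) y" using fc sp by auto
      have cF: "\<And>Z. Z \<in> borel_measurable (Fs k) \<Longrightarrow> (\<lambda>\<omega>. F (Suc k) \<omega> (Z \<omega>)) \<in> borel_measurable (Fs k)"
        by (rule carath_meas[OF Fm Fc'])
      have cf: "\<And>Z. Z \<in> borel_measurable (Fs k) \<Longrightarrow> (\<lambda>\<omega>. f (Suc k) \<omega> (Z \<omega>)) \<in> borel_measurable (Fs k)"
        by (rule carath_meas[OF fm fc'])
      have r0: "\<And>\<omega>. \<omega> \<in> space (Fs k) \<Longrightarrow> 0 \<le> max (2 * Cs k \<omega>) (max (Cs k \<omega> + l k \<omega>) (Cs k \<omega> - u k \<omega>))"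
      proof -
        fix \<omega> assume "\<omega> \<in> space (Fs k)"
        then have "0 \<le> Cs k \<omega>" using bnd[of \<omega> k] sp by simp
        then show "0 \<le> max (2 * Cs k \<omega>) (max (Cs k \<omega> + l k \<omega>) (Cs k \<omega> - u k \<omega>))" by (simp add: le_max_iff_disj)
      qed
      have bbm[measurable]: "\<beta>b k \<in> borel_measurable (Fs k)"
        by (rule measurable_cong[THEN iffD2, OF _ inf_meas[OF fm fc' _ r0]]) (simp_all add: S1_beta sp)
      have F1[measurable]: "(\<lambda>\<omega>. F (Suc k) \<omega> (l k \<omega> - \<phi> k \<omega> \<bullet> \<theta>s k \<omega>)) \<in> borel_measurable (Fs k)"
        "(\<lambda>\<omega>. F (Suc k) \<omega> (l k \<omega> - \<phi> k \<omega> \<bullet> \<theta>b k \<omega>)) \<in> borel_measurable (Fs k)"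
        "(\<lambda>\<omega>. F (Suc k) \<omega> (\<phi> k \<omega> \<bullet> \<theta>s k \<omega> - \<phi> k \<omega> \<bullet> \<theta>b k \<omega>)) \<in> borel_measurable (Fs k)"
        "(\<lambda>\<omega>. F (Suc k) \<omega> (u k \<omega> - \<phi> k \<omega> \<bullet> \<theta>s k \<omega>)) \<in> borel_measurable (Fs k)"
        "(\<lambda>\<omega>. F (Suc k) \<omega> (u k \<omega> - \<phi> k \<omega> \<bullet> \<theta>b k \<omega>)) \<in> borel_measurable (Fs k)"
        "(\<lambda>\<omega>. F (Suc k) \<omega> (l k \<omega> - \<phi> k \<omega> \<bullet> \<theta>b k \<omega>)) \<in> borel_measurable (Fs k)"
        "(\<lambda>\<omega>. F (Suc k) \<omega> (u k \<omega> - \<phi> k \<omega> \<bullet> \<theta>b k \<omega>)) \<in> borel_measurable (Fs k)"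
        "(\<lambda>\<omega>. f (Suc k) \<omega> (l k \<omega> - \<phi> k \<omega> \<bullet> \<theta>s k \<omega>)) \<in> borel_measurable (Fs k)"
        "(\<lambda>\<omega>. f (Suc k) \<omega> (u k \<omega> - \<phi> k \<omega> \<bullet> \<theta>s k \<omega>)) \<in> borel_measurable (Fs k)"
        "(\<lambda>\<omega>. f (Suc k) \<omega> 0) \<in> borel_measurable (Fs k)"
        by (rule cF cf fm; measurable)+
      have bm[measurable]: "\<beta> k \<in> borel_measurable (Fs k)"
      proof (rule measurable_cong[THEN iffD2])
        show "\<And>\<omega>. \<omega> \<in> space (Fs k) \<Longrightarrow> \<beta> k \<omega> = beta2 (F (Suc k) \<omega>) (f (Suc k) \<omega>) (L k \<omega>) (l k \<omega>) (u k \<omega>) (U k \<omega>)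
              (\<phi> k \<omega> \<bullet> \<theta>s k \<omega>) (\<phi> k \<omega> \<bullet> \<theta>b k \<omega>)" using S2_beta sp by simp
        show "(\<lambda>\<omega>. beta2 (F (Suc k) \<omega>) (f (Suc k) \<omega>) (L k \<omega>) (l k \<omega>) (u k \<omega>) (U k \<omega>)
              (\<phi> k \<omega> \<bullet> \<theta>s k \<omega>) (\<phi> k \<omega> \<bullet> \<theta>b k \<omega>)) \<in> borel_measurable (Fs k)"
          unfolding beta2_def Let_def Sat_def by measurable
      qed
      have abm[measurable]: "ab k \<in> borel_measurable (Fs k)"
        by (rule measurable_cong[THEN iffD2, of _ _ "\<lambda>\<omega>. 1 / (\<mu>b k \<omega> + \<beta>b k \<omega> * (b k \<omega>)\<^sup>2 * (\<phi> k \<omega> \<bullet> (Pb k \<omega> *v \<phi> k \<omega>)))"])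
           (simp_all add: S1_a sp)
      have am[measurable]: "a k \<in> borel_measurable (Fs k)"
        by (rule measurable_cong[THEN iffD2, of _ _ "\<lambda>\<omega>. 1 / (\<mu> k \<omega> + \<beta> k \<omega> * (b k \<omega>)\<^sup>2 * (\<phi> k \<omega> \<bullet> (P k \<omega> *v \<phi> k \<omega>)))"])
           (simp_all add: S2_a sp)
      have Pbm: "Pb (Suc k) \<in> borel_measurable (Fs k)"
        by (rule measurable_cong[THEN iffD2, of _ _ "\<lambda>\<omega>. Pb k \<omega> - (ab k \<omega> * \<beta>b k \<omega> * (b k \<omega>)\<^sup>2) *\<^sub>R (Pb k \<omega> ** outer (\<phi> k \<omega>) (\<phi> k \<omega>) ** Pb k \<omega>)"])
           (simp_all add: S1_P sp)
      have Pm: "P (Suc k) \<in> borel_measurable (Fs k)"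
        by (rule measurable_cong[THEN iffD2, of _ _ "\<lambda>\<omega>. P k \<omega> - (a k \<omega> * \<beta> k \<omega> * (b k \<omega>)\<^sup>2) *\<^sub>R (P k \<omega> ** outer (\<phi> k \<omega>) (\<phi> k \<omega>) ** P k \<omega>)"])
           (simp_all add: S2_P sp)
      obtain m1 m2 where mu1: "0 < m1" "\<And>k \<omega>. \<omega> \<in> space M \<Longrightarrow> m1 \<le> \<mu>b k \<omega> \<and> \<mu>b k \<omega> \<le> m2"
        using S1_mu by blast
      obtain n1 n2 where mu2: "0 < n1" "\<And>k \<omega>. \<omega> \<in> space M \<Longrightarrow> n1 \<le> \<mu> k \<omega> \<and> \<mu> k \<omega> \<le> n2"
        using S2_mu by blast
      have pdS: "posdef (P (Suc k) \<omega>) \<and> posdef (Pb (Suc k) \<omega>)" if \<omega>: "\<omega> \<in> space M" for \<omega>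
      proof
        have can': "cdfan (F (Suc k) \<omega>) (f (Suc k) \<omega>)" using can \<omega> by blast
        have bb0: "0 \<le> \<beta>b k \<omega>"
        proof -
          have "0 \<le> max (2 * Cs k \<omega>) (max (Cs k \<omega> + l k \<omega>) (Cs k \<omega> - u k \<omega>))" using r0 \<omega> sp by simp
          then have ne: "{x. \<bar>x\<bar> \<le> max (2 * Cs k \<omega>) (max (Cs k \<omega> + l k \<omega>) (Cs k \<omega> - u k \<omega>))} \<noteq> {}"
            by (metis (mono_tags, lifting) abs_zero empty_Collect_eq)
          show ?thesis unfolding S1_beta[OF \<omega>] by (rule cINF_greatest[OF ne]) (rule cdfan.fnn[OF can'])
        qed
        have b0: "0 \<le> \<beta> k \<omega>" unfolding S2_beta[OF \<omega>]
          by (rule beta2_nonneg[OF cdfan.mono[OF can'] cdfan.fnn[OF can'] A3_half[OF \<omega>]])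
        have eb: "ab k \<omega> * \<beta>b k \<omega> * (b k \<omega>)\<^sup>2 = 1 / (\<mu>b k \<omega> + (\<beta>b k \<omega> * (b k \<omega>)\<^sup>2) * (\<phi> k \<omega> \<bullet> (Pb k \<omega> *v \<phi> k \<omega>))) * (\<beta>b k \<omega> * (b k \<omega>)\<^sup>2)"
          by (simp add: S1_a[OF \<omega>])
        have e: "a k \<omega> * \<beta> k \<omega> * (b k \<omega>)\<^sup>2 = 1 / (\<mu> k \<omega> + (\<beta> k \<omega> * (b k \<omega>)\<^sup>2) * (\<phi> k \<omega> \<bullet> (P k \<omega> *v \<phi> k \<omega>))) * (\<beta> k \<omega> * (b k \<omega>)\<^sup>2)"
          by (simp add: S2_a[OF \<omega>])
        show "posdef (P (Suc k) \<omega>)" unfolding S2_P[OF \<omega>] e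
          by (rule pd_update) (use pdk[OF \<omega>] mu2(1) mu2(2)[OF \<omega>, of k] b0 in auto)
        show "posdef (Pb (Suc k) \<omega>)" unfolding S1_P[OF \<omega>] eb
          by (rule pd_update) (use pdk[OF \<omega>] mu1(1) mu1(2)[OF \<omega>, of k] bb0 in auto)
      qed
      note lf = measurable_from_subalg[OF subs[of k]]
      note mS[measurable] = lf[OF mk(1)] lf[OF mk(2)] lf[OF mk(3)] lf[OF mk(4)] lf[OF mk(5)] lf[OF mk(7)]
        lf[OF IH(1)] lf[OF IH(2)] lf[OF IH(3)] lf[OF IH(4)] lf[OF abm] lf[OF am] lf[OF Pbm] lf[OF Pm]
        lf[OF F1(1)] lf[OF F1(2)] lf[OF F1(4)] lf[OF F1(5)] eps_meas[of k]
      have ym[measurable]: "y (Suc k) \<in> borel_measurable (Fs (Suc k))"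
      proof (rule measurable_cong[THEN iffD2, of _ _ "\<lambda>\<omega>. Sat (L k \<omega>) (l k \<omega>) (u k \<omega>) (U k \<omega>) (\<phi> k \<omega> \<bullet> \<theta> + \<epsilon> (Suc k) \<omega>)"])
        show "\<And>\<omega>. \<omega> \<in> space (Fs (Suc k)) \<Longrightarrow> y (Suc k) \<omega> = Sat (L k \<omega>) (l k \<omega>) (u k \<omega>) (U k \<omega>) (\<phi> k \<omega> \<bullet> \<theta> + \<epsilon> (Suc k) \<omega>)"
          using y_def sp by simp
        show "(\<lambda>\<omega>. Sat (L k \<omega>) (l k \<omega>) (u k \<omega>) (U k \<omega>) (\<phi> k \<omega> \<bullet> \<theta> + \<epsilon> (Suc k) \<omega>)) \<in> borel_measurable (Fs (Suc k))"
          by (rule Sat_meas; measurable)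
      qed
      have vbm[measurable]: "vb (Suc k) \<in> borel_measurable (Fs (Suc k))"
      proof (rule measurable_cong[THEN iffD2, of _ _ "\<lambda>\<omega>. sgn (y (Suc k) \<omega> - Sat (L k \<omega>) (l k \<omega>) (u k \<omega>) (U k \<omega>) (\<phi> k \<omega> \<bullet> \<theta>b k \<omega>))
        + corr (F (Suc k) \<omega>) (L k \<omega>) (l k \<omega>) (u k \<omega>) (U k \<omega>) (\<phi> k \<omega> \<bullet> \<theta>b k \<omega>)"])
        show "\<And>\<omega>. \<omega> \<in> space (Fs (Suc k)) \<Longrightarrow> vb (Suc k) \<omega> = sgn (y (Suc k) \<omega> - Sat (L k \<omega>) (l k \<omega>) (u k \<omega>) (U k \<omega>) (\<phi> k \<omega> \<bullet> \<theta>b k \<omega>))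
        + corr (F (Suc k) \<omega>) (L k \<omega>) (l k \<omega>) (u k \<omega>) (U k \<omega>) (\<phi> k \<omega> \<bullet> \<theta>b k \<omega>)" using S1_v sp by simp
        have s1: "(\<lambda>\<omega>. Sat (L k \<omega>) (l k \<omega>) (u k \<omega>) (U k \<omega>) (\<phi> k \<omega> \<bullet> \<theta>b k \<omega>)) \<in> borel_measurable (Fs (Suc k))"
          by (rule Sat_meas; measurable)
        have c1: "(\<lambda>\<omega>. corr (F (Suc k) \<omega>) (L k \<omega>) (l k \<omega>) (u k \<omega>) (U k \<omega>) (\<phi> k \<omega> \<bullet> \<theta>b k \<omega>)) \<in> borel_measurable (Fs (Suc k))"
          by (rule corr_meas; measurable)
        show "(\<lambda>\<omega>. sgn (y (Suc k) \<omega> - Sat (L k \<omega>) (l k \<omega>) (u k \<omega>) (U k \<omega>) (\<phi> k \<omega> \<bullet> \<theta>b k \<omega>))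
        + corr (F (Suc k) \<omega>) (L k \<omega>) (l k \<omega>) (u k \<omega>) (U k \<omega>) (\<phi> k \<omega> \<bullet> \<theta>b k \<omega>)) \<in> borel_measurable (Fs (Suc k))"
          using s1 c1 by measurable
      qed
      have vm[measurable]: "v (Suc k) \<in> borel_measurable (Fs (Suc k))"
      proof (rule measurable_cong[THEN iffD2, of _ _ "\<lambda>\<omega>. sgn (y (Suc k) \<omega> - Sat (L k \<omega>) (l k \<omega>) (u k \<omega>) (U k \<omega>) (\<phi> k \<omega> \<bullet> \<theta>s k \<omega>))
        + corr (F (Suc k) \<omega>) (L k \<omega>) (l k \<omega>) (u k \<omega>) (U k \<omega>) (\<phi> k \<omega> \<bullet> \<theta>s k \<omega>)"])
        show "\<And>\<omega>. \<omega> \<in> space (Fs (Suc k)) \<Longrightarrow> v (Suc k) \<omega> = sgn (y (Suc k) \<omega> - Sat (L k \<omega>) (l k \<omega>) (u k \<omega>) (U k \<omega>) (\<phi> k \<omega> \<bullet> \<theta>s k \<omega>))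
        + corr (F (Suc k) \<omega>) (L k \<omega>) (l k \<omega>) (u k \<omega>) (U k \<omega>) (\<phi> k \<omega> \<bullet> \<theta>s k \<omega>)" using S2_v sp by simp
        have s1: "(\<lambda>\<omega>. Sat (L k \<omega>) (l k \<omega>) (u k \<omega>) (U k \<omega>) (\<phi> k \<omega> \<bullet> \<theta>s k \<omega>)) \<in> borel_measurable (Fs (Suc k))"
          by (rule Sat_meas; measurable)
        have c1: "(\<lambda>\<omega>. corr (F (Suc k) \<omega>) (L k \<omega>) (l k \<omega>) (u k \<omega>) (U k \<omega>) (\<phi> k \<omega> \<bullet> \<theta>s k \<omega>)) \<in> borel_measurable (Fs (Suc k))"
          by (rule corr_meas; measurable)
        show "(\<lambda>\<omega>. sgn (y (Suc k) \<omega> - Sat (L k \<omega>) (l k \<omega>) (u k \<omega>) (U k \<omega>) (\<phi> k \<omega> \<bullet> \<theta>s k \<omega>))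
        + corr (F (Suc k) \<omega>) (L k \<omega>) (l k \<omega>) (u k \<omega>) (U k \<omega>) (\<phi> k \<omega> \<bullet> \<theta>s k \<omega>)) \<in> borel_measurable (Fs (Suc k))"
          using s1 c1 by measurable
      qed
      have Qbm[measurable]: "(\<lambda>\<omega>. matrix_inv (Pb (Suc k) \<omega>)) \<in> borel_measurable (Fs (Suc k))"
        by (rule minv_meas[OF lf[OF Pbm]]) (use pd_inj(2) pdS sp in blast)
      have Qm[measurable]: "(\<lambda>\<omega>. matrix_inv (P (Suc k) \<omega>)) \<in> borel_measurable (Fs (Suc k))"
        by (rule minv_meas[OF lf[OF Pm]]) (use pd_inj(2) pdS sp in blast)
      have thbS: "\<theta>b (Suc k) \<in> borel_measurable (Fs (Suc k))"
      proof (rule measurable_cong[THEN iffD2, of _ _ "\<lambda>\<omega>. proj (matrix_inv (Pb (Suc k) \<omega>)) D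
          (\<theta>b k \<omega> + (ab k \<omega> * b k \<omega> * vb (Suc k) \<omega>) *\<^sub>R (Pb k \<omega> *v \<phi> k \<omega>))"])
        show "\<And>\<omega>. \<omega> \<in> space (Fs (Suc k)) \<Longrightarrow> \<theta>b (Suc k) \<omega> = proj (matrix_inv (Pb (Suc k) \<omega>)) D
          (\<theta>b k \<omega> + (ab k \<omega> * b k \<omega> * vb (Suc k) \<omega>) *\<^sub>R (Pb k \<omega> *v \<phi> k \<omega>))" using S1_theta sp by simp
        show "(\<lambda>\<omega>. proj (matrix_inv (Pb (Suc k) \<omega>)) D
          (\<theta>b k \<omega> + (ab k \<omega> * b k \<omega> * vb (Suc k) \<omega>) *\<^sub>R (Pb k \<omega> *v \<phi> k \<omega>))) \<in> borel_measurable (Fs (Suc k))"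
        proof (rule proj_meas[OF Qbm _ A1_D(2) A1_D(1) Dne])
          show "(\<lambda>\<omega>. \<theta>b k \<omega> + (ab k \<omega> * b k \<omega> * vb (Suc k) \<omega>) *\<^sub>R (Pb k \<omega> *v \<phi> k \<omega>)) \<in> borel_measurable (Fs (Suc k))"
            by (intro borel_measurable_add borel_measurable_scaleR borel_measurable_times mvmult_meas mS vbm phi_meas lf)
          show "\<And>\<omega> x. \<omega> \<in> space (Fs (Suc k)) \<Longrightarrow> x \<noteq> 0 \<Longrightarrow> 0 < x \<bullet> (matrix_inv (Pb (Suc k) \<omega>) *v x)"
            using pd_inv_pos pdS sp by blast
        qed
      qed
      have thsS: "\<theta>s (Suc k) \<in> borel_measurable (Fs (Suc k))"
      proof (rule measurable_cong[THEN iffD2, of _ _ "\<lambda>\<omega>. proj (matrix_inv (P (Suc k) \<omega>)) D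
          (\<theta>s k \<omega> + (a k \<omega> * b k \<omega> * v (Suc k) \<omega>) *\<^sub>R (P k \<omega> *v \<phi> k \<omega>))"])
        show "\<And>\<omega>. \<omega> \<in> space (Fs (Suc k)) \<Longrightarrow> \<theta>s (Suc k) \<omega> = proj (matrix_inv (P (Suc k) \<omega>)) D
          (\<theta>s k \<omega> + (a k \<omega> * b k \<omega> * v (Suc k) \<omega>) *\<^sub>R (P k \<omega> *v \<phi> k \<omega>))" using S2_theta sp by simp
        show "(\<lambda>\<omega>. proj (matrix_inv (P (Suc k) \<omega>)) D
          (\<theta>s k \<omega> + (a k \<omega> * b k \<omega> * v (Suc k) \<omega>) *\<^sub>R (P k \<omega> *v \<phi> k \<omega>))) \<in> borel_measurable (Fs (Suc k))"
        proof (rule proj_meas[OF Qm _ A1_D(2) A1_D(1) Dne])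
          show "(\<lambda>\<omega>. \<theta>s k \<omega> + (a k \<omega> * b k \<omega> * v (Suc k) \<omega>) *\<^sub>R (P k \<omega> *v \<phi> k \<omega>)) \<in> borel_measurable (Fs (Suc k))"
            by (intro borel_measurable_add borel_measurable_scaleR borel_measurable_times mvmult_meas mS vm phi_meas lf)
          show "\<And>\<omega> x. \<omega> \<in> space (Fs (Suc k)) \<Longrightarrow> x \<noteq> 0 \<Longrightarrow> 0 < x \<bullet> (matrix_inv (P (Suc k) \<omega>) *v x)"
            using pd_inv_pos pdS sp by blast
        qed
      qed
      show ?case using thsS thbS lf[OF Pm] lf[OF Pbm] pdS by blast
    qed
  qed
  have ordk: "AE \<omega> in M. \<forall>k. L k \<omega> \<le> l k \<omega> \<and> l k \<omega> \<le> u k \<omega> \<and> u k \<omega> \<le> U k \<omega> \<and> \<not>(L k \<omega> = l k \<omega> \<and> l k \<omega> = u k \<omega> \<and> u k \<omega> = U k \<omega>)"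
    using A2_order A2_nondeg by eventually_elim auto
  have ce: "AE \<omega> in M. \<psi> k \<omega> =
      (if Sat (L k \<omega>) (l k \<omega>) (u k \<omega>) (U k \<omega>) (\<phi> k \<omega> \<bullet> \<theta>s k \<omega>) = L k \<omega> then 1 - F (Suc k) \<omega> (l k \<omega> - \<phi> k \<omega> \<bullet> \<theta>)
        else if Sat (L k \<omega>) (l k \<omega>) (u k \<omega>) (U k \<omega>) (\<phi> k \<omega> \<bullet> \<theta>s k \<omega>) = U k \<omega> then - F (Suc k) \<omega> (u k \<omega> - \<phi> k \<omega> \<bullet> \<theta>)
        else 1 - 2 * F (Suc k) \<omega> (\<phi> k \<omega> \<bullet> \<theta>s k \<omega> - \<phi> k \<omega> \<bullet> \<theta>))
      + corr (F (Suc k) \<omega>) (L k \<omega>) (l k \<omega>) (u k \<omega>) (U k \<omega>) (\<phi> k \<omega> \<bullet> \<theta>s k \<omega>)" for k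
  proof -
    interpret cs: cdfctx M "Fs k" "\<epsilon> (Suc k)" "F (Suc k)" by (rule stp)
    interpret fs: finite_measure_subalgebra M "Fs k"
      by (simp add: finite_measure_subalgebra_def finite_measure_subalgebra_axioms_def filt_sub finite_measure_axioms)
    note mk[measurable] = phi_meas[of k] A2_meas(1-4)[of k] conjunct1[OF meas[of k]]
    have ord1: "AE \<omega> in M. L k \<omega> \<le> l k \<omega> \<and> l k \<omega> \<le> u k \<omega> \<and> u k \<omega> \<le> U k \<omega> \<and> \<not>(L k \<omega> = l k \<omega> \<and> l k \<omega> = u k \<omega> \<and> u k \<omega> = U k \<omega>)"
      using ordk by eventually_elim auto
    have sc: "AE \<omega> in M. real_cond_exp M (Fs k) (\<lambda>\<omega>. sgn (Sat (L k \<omega>) (l k \<omega>) (u k \<omega>) (U k \<omega>) (\<phi> k \<omega> \<bullet> \<theta> + \<epsilon> (Suc k) \<omega>) - Sat (L k \<omega>) (l k \<omega>) (u k \<omega>) (U k \<omega>) (\<phi> k \<omega> \<bullet> \<theta>s k \<omega>))) \<omega>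
     = (if Sat (L k \<omega>) (l k \<omega>) (u k \<omega>) (U k \<omega>) (\<phi> k \<omega> \<bullet> \<theta>s k \<omega>) = L k \<omega> then 1 - F (Suc k) \<omega> (l k \<omega> - \<phi> k \<omega> \<bullet> \<theta>)
        else if Sat (L k \<omega>) (l k \<omega>) (u k \<omega>) (U k \<omega>) (\<phi> k \<omega> \<bullet> \<theta>s k \<omega>) = U k \<omega> then - F (Suc k) \<omega> (u k \<omega> - \<phi> k \<omega> \<bullet> \<theta>)
        else 1 - 2 * F (Suc k) \<omega> (\<phi> k \<omega> \<bullet> \<theta>s k \<omega> - \<phi> k \<omega> \<bullet> \<theta>))"
      by (rule cs.sgn_condexp[OF _ _ _ _ _ _ ord1]) measurable
    have mM: "(\<lambda>\<omega>. sgn (Sat (L k \<omega>) (l k \<omega>) (u k \<omega>) (U k \<omega>) (\<phi> k \<omega> \<bullet> \<theta> + \<epsilon> (Suc k) \<omega>) - Sat (L k \<omega>) (l k \<omega>) (u k \<omega>) (U k \<omega>) (\<phi> k \<omega> \<bullet> \<theta>s k \<omega>))) \<in> borel_measurable M"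
      using measurable_from_subalg[OF filt_sub mk(1)] measurable_from_subalg[OF filt_sub mk(2)]
        measurable_from_subalg[OF filt_sub mk(3)] measurable_from_subalg[OF filt_sub mk(4)]
        measurable_from_subalg[OF filt_sub mk(5)] measurable_from_subalg[OF filt_sub mk(6)] epsM[of k]
      unfolding Sat_def by measurable
    have mM': "(\<lambda>\<omega>. sgn (y (Suc k) \<omega> - Sat (L k \<omega>) (l k \<omega>) (u k \<omega>) (U k \<omega>) (\<phi> k \<omega> \<bullet> \<theta>s k \<omega>))) \<in> borel_measurable M"
      by (rule measurable_cong[THEN iffD2, OF _ mM]) (simp add: y_def)
    have cg: "AE \<omega> in M. real_cond_exp M (Fs k) (\<lambda>\<omega>. sgn (y (Suc k) \<omega> - Sat (L k \<omega>) (l k \<omega>) (u k \<omega>) (U k \<omega>) (\<phi> k \<omega> \<bullet> \<theta>s k \<omega>))) \<omega>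
       = real_cond_exp M (Fs k) (\<lambda>\<omega>. sgn (Sat (L k \<omega>) (l k \<omega>) (u k \<omega>) (U k \<omega>) (\<phi> k \<omega> \<bullet> \<theta> + \<epsilon> (Suc k) \<omega>) - Sat (L k \<omega>) (l k \<omega>) (u k \<omega>) (U k \<omega>) (\<phi> k \<omega> \<bullet> \<theta>s k \<omega>))) \<omega>"
      by (rule fs.real_cond_exp_cong[OF _ mM' mM]) (auto simp: y_def intro!: AE_I2)
    show ?thesis using sc cg by eventually_elim (simp add: psi_def)
  qed
  have ceall: "AE \<omega> in M. \<forall>k. \<psi> k \<omega> =
      (if Sat (L k \<omega>) (l k \<omega>) (u k \<omega>) (U k \<omega>) (\<phi> k \<omega> \<bullet> \<theta>s k \<omega>) = L k \<omega> then 1 - F (Suc k) \<omega> (l k \<omega> - \<phi> k \<omega> \<bullet> \<theta>)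
        else if Sat (L k \<omega>) (l k \<omega>) (u k \<omega>) (U k \<omega>) (\<phi> k \<omega> \<bullet> \<theta>s k \<omega>) = U k \<omega> then - F (Suc k) \<omega> (u k \<omega> - \<phi> k \<omega> \<bullet> \<theta>)
        else 1 - 2 * F (Suc k) \<omega> (\<phi> k \<omega> \<bullet> \<theta>s k \<omega> - \<phi> k \<omega> \<bullet> \<theta>))
      + corr (F (Suc k) \<omega>) (L k \<omega>) (l k \<omega>) (u k \<omega>) (U k \<omega>) (\<phi> k \<omega> \<bullet> \<theta>s k \<omega>)"
    using ce by (simp add: AE_all_countable)
  show ?thesis
    using ceall ordk A2_M A3_f AE_space
  proof eventually_elim
    case (elim \<omega>)
    obtain c1 c2 where c: "0 < c1" "\<And>k x. \<bar>x\<bar> \<le> max (2 * C) (C + Mc) \<Longrightarrow> c1 \<le> f (Suc k) \<omega> x \<and> f (Suc k) \<omega> x \<le> c2"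
      using elim(4) by blast
    show ?case
    proof (rule exI[of _ "4 * c2"], intro allI)
      fix k
      have can': "cdfan (F (Suc k) \<omega>) (f (Suc k) \<omega>)" using can elim(5) by blast
      have lip: "0 \<le> F (Suc k) \<omega> b - F (Suc k) \<omega> a \<and> F (Suc k) \<omega> b - F (Suc k) \<omega> a \<le> c2 * (b - a)"
        if "-max (2*C) (C + Mc) \<le> a" "a \<le> b" "b \<le> max (2*C) (C + Mc)" for a b
      proof (rule cdfan.Flip[OF can' that(2)])
        fix y assume "y \<in> {a..b}"
        then have "\<bar>y\<bar> \<le> max (2 * C) (C + Mc)" using that by auto
        then show "f (Suc k) \<omega> y \<le> c2" using c(2) by blast
      qed
      have fb: "\<bar>f (Suc k) \<omega> y\<bar> \<le> c2" if "\<bar>y\<bar> \<le> max (2*C) (C + Mc)" for y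
        using c(2)[OF that, of k] c(1) by auto
      have o: "L k \<omega> \<le> l k \<omega>" "l k \<omega> \<le> u k \<omega>" "u k \<omega> \<le> U k \<omega>" "\<not>(L k \<omega> = l k \<omega> \<and> l k \<omega> = u k \<omega> \<and> u k \<omega> = U k \<omega>)"
        using elim(2) by auto
      have mc: "l k \<omega> \<le> Mc" "- u k \<omega> \<le> Mc" using elim(3) by auto
      have b: "\<bar>\<phi> k \<omega> \<bullet> \<theta>\<bar> \<le> C" "\<bar>\<phi> k \<omega> \<bullet> \<theta>s k \<omega>\<bar> \<le> C" "\<bar>\<phi> k \<omega> \<bullet> \<theta>b k \<omega>\<bar> \<le> C"
        using bnd[OF elim(5)] by auto
      note fin = final_bound[of C Mc "F (Suc k) \<omega>" c2 "f (Suc k) \<omega>", OF lip fb A3_half[OF elim(5)] o b mc]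
      show "\<bar>\<psi> k \<omega> - \<beta> k \<omega> * (\<phi> k \<omega> \<bullet> (\<theta> - \<theta>s k \<omega>))\<bar> \<le> 4 * c2 * \<bar>\<phi> k \<omega> \<bullet> (\<theta> - \<theta>b k \<omega>)\<bar>"
        using fin elim(1) S2_beta[OF elim(5)] by (simp add: inner_diff_right)
    qed
  qed
qed


end
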